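(* Let the setting, notation and assumptions (UA1)–(UA5) be as in the context. Assume that the map $\check\theta\mapsto\hat S(\hat{\boldsymbol\beta}_{\check\theta})$ is continuous with a single root $\tilde\theta$ or non-decreasing, that for every $\boldsymbol\beta\in\boldsymbol\Omega$ and $\epsilon>0$, $\mathbf v^TE_{\mathbf t}(\boldsymbol\beta_{\theta-\epsilon})\cdot\mathbf v^TE_{\mathbf t}(\boldsymbol\beta_{\theta+\epsilon})<0$, and that $n^{1/2}(r_1(n)r_5(n)+r_2(n)r_3(n))=o(1)$. Then $$\lim_{n\to\infty}\sup_{\boldsymbol\beta\in\boldsymbol\Omega}\sup_{t\in\mathbb R}\big|\mathbb P_{\boldsymbol\beta}(\hat U_n\le t)-\Phi(t)\big|=0,\qquad \hat U_n=\frac{n^{1/2}}{\hat\sigma}(\tilde\theta-\theta).$$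
   Context: Data $\mathbf Z\in\mathbb R^{n\times q}$ with law $\mathbb P_{\boldsymbol\beta}$ (expectation $\mathbb E_{\boldsymbol\beta}$) indexed by the true parameter $\boldsymbol\beta\in\boldsymbol\Omega=\{\boldsymbol\beta\in\mathbb R^d:\|\boldsymbol\beta\|_0\le s^*\}$; asymptotics as $n\to\infty$. $\mathbf t(\mathbf Z,\mathbf b)\in\mathbb R^d$ is an estimating equation, twice differentiable in $\mathbf b$, $\mathbf T(\mathbf Z,\mathbf b)=\partial\mathbf t/\partial\mathbf b$; under true $\boldsymbol\beta$, $E_{\mathbf t}(\mathbf b)=\lim_n\mathbb E_{\boldsymbol\beta}\mathbf t(\mathbf Z,\mathbf b)$, $E_{\mathbf T}(\mathbf b)=\lim_n\mathbb E_{\boldsymbol\beta}\mathbf T(\mathbf Z,\mathbf b)$, with $\boldsymbol\beta$ the unique root of $E_{\mathbf t}$ and $E_{\mathbf T}(\boldsymbol\beta)$ invertible. $\boldsymbol\beta=(\theta,\boldsymbol\gamma^T)^T$ ($\theta$ first coordinate); $\mathbf b_{\check\theta}$ replaces the first coordinate of $\mathbf b$ by $\check\theta$. $\mathbf v=\mathbf v(\boldsymbol\beta)$, $\mathbf v^T$ = first row of $[E_{\mathbf T}(\boldsymbol\beta)]^{-1}$; $S(\boldsymbol\beta)=\mathbf v^T\mathbf t(\mathbf Z,\boldsymbol\beta)$. $\hat{\boldsymbol\beta}=\arg\min\|\mathbf b\|_1$ s.t. $\|\mathbf t(\mathbf Z,\mathbf b)\|_\infty\le\lambda$; $\hat{\mathbf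 v}=\arg\min\|\mathbf u\|_1$ s.t. $\|\mathbf u^T\mathbf T(\mathbf Z,\hat{\boldsymbol\beta})-\mathbf e_1\|_\infty\le\lambda'$, $\mathbf e_1=(1,0,\dots,0)$; $\hat S(\mathbf b)=\hat{\mathbf v}^T\mathbf t(\mathbf Z,\mathbf b)$; $\tilde\theta$ a root of $\check\theta\mapsto\hat S(\hat{\boldsymbol\beta}_{\check\theta})$. $[\mathbf A]_{-1}$ removes, $[\mathbf A]_{*1}$ keeps, the first column. $\Phi$ is the standard normal cdf. (UA1) $\lim_n\inf_{\boldsymbol\beta\in\boldsymbol\Omega}\mathbb P_{\boldsymbol\beta}(\|\hat{\boldsymbol\beta}-\boldsymbol\beta\|_1\le r_1(n))=1$, $\lim_n\inf_{\boldsymbol\beta\in\boldsymbol\Omega}\mathbb P_{\boldsymbol\beta}(\|\hat{\mathbf v}-\mathbf v\|_1\le r_2(n))=1$, $r_1,r_2=o(1)$. (UA2) For some $\eta>0$, $\mathcal N_\theta=(\theta-\eta,\theta+\eta)$, $r_3,r_4,r_5=o(1)$: $\lim_n\inf_{\boldsymbol\beta}\inf_{\check\theta\in\mathcal N_\theta}\mathbb P_{\boldsymbol\beta}(\|\mathbf t(\mathbf Z,\boldsymbol\beta_{\check\theta})-E_{\mathbf t}(\boldsymbol\beta_{\check\theta})\|_\infty\le r_3(n))=1$; same with $|\mathbf v^T\mathbf t(\mathbf Z,\boldsymbol\beta_{\check\theta})-\mathbf v^TE_{\mathbf t}(\boldsymbol\beta_{\check\theta})|\le r_4(n)$; same with $\sup_{\nu\in[0,1]}\|\hat{\mathbf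 v}^T\mathbf T(\mathbf Z,\tilde{\boldsymbol\beta}_\nu)-\mathbf v^TE_{\mathbf T}(\boldsymbol\beta_{\check\theta})\|_\infty\le r_5(n)$, $\tilde{\boldsymbol\beta}_\nu=\nu\hat{\boldsymbol\beta}_{\check\theta}+(1-\nu)\boldsymbol\beta_{\check\theta}$; and $\sup_{\boldsymbol\beta}\sup_{\check\theta\in\mathcal N_\theta}\|E_{\mathbf t}(\boldsymbol\beta_{\check\theta})\|_\infty<\infty$, $\sup_{\boldsymbol\beta}\sup_{\check\theta\in\mathcal N_\theta}\|\mathbf v^T[E_{\mathbf T}(\boldsymbol\beta_{\check\theta})]_{-1}\|_\infty<\infty$ (all $\inf/\sup$ over $\boldsymbol\beta\in\boldsymbol\Omega$). (UA3) With $\boldsymbol\Sigma=\lim_n n\,\mathrm{Cov}_{\boldsymbol\beta}\mathbf t(\mathbf Z,\boldsymbol\beta)$ and $\sigma^2=\mathbf v^T\boldsymbol\Sigma\mathbf v$: $\inf_{\boldsymbol\beta\in\boldsymbol\Omega}\sigma^2\ge C>0$ and $\lim_n\sup_{\boldsymbol\beta\in\boldsymbol\Omega}\sup_t|\mathbb P_{\boldsymbol\beta}(\sigma^{-1}n^{1/2}S(\boldsymbol\beta)\le t)-\Phi(t)|=0$. (UA4) There is $\gamma>0$ with $\sup_{\boldsymbol\beta\in\boldsymbol\Omega}\sup_{\max(\|\check{\mathbf v}-\mathbf v\|_1,\|\check{\boldsymbol\beta}-\boldsymbol\beta\|_1)<\gamma}|\check{\mathbf v}^T\frac{\partial}{\partial\theta}[\mathbf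 T(\mathbf Z,\check{\boldsymbol\beta})]_{*1}|\le\psi(\mathbf Z)$ for a function $\psi$ with $\sup_{\boldsymbol\beta\in\boldsymbol\Omega}\mathbb E_{\boldsymbol\beta}\psi(\mathbf Z)<\infty$. (UA5) There is an estimator $\hat\sigma^2$ with $\lim_n\inf_{\boldsymbol\beta\in\boldsymbol\Omega}\mathbb P_{\boldsymbol\beta}(|\hat\sigma^2-\sigma^2|\le r_6(n))=1$, $r_6=o(1)$. *)

theory Defs
  imports "HOL-Probability.Probability"
begin

text \<open>Vectors in R^d are rendered as real ^ 'd for a finite index type 'd;
  the distinguished coordinate of interest (the paper's first coordinate,
  theta) is an index k of type 'd.\<close>

definition l1norm :: "real ^ 'd \<Rightarrow> real" where
  "l1norm x = (\<Sum>i\<in>UNIV. \<bar>x $ i\<bar>)"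

definition linfnorm :: "real ^ 'd \<Rightarrow> real" where
  "linfnorm x = Max (range (\<lambda>i. \<bar>x $ i\<bar>))"

definition l0norm :: "real ^ 'd \<Rightarrow> nat" where
  "l0norm x = card {i. x $ i \<noteq> 0}"

definition setc :: "'d \<Rightarrow> real ^ 'd \<Rightarrow> real \<Rightarrow> real ^ 'd" where
  "setc k b c = (\<chi> i. if i = k then c else b $ i)"

definition Phi :: "real \<Rightarrow> real" where
  "Phi x = measure (density lborel std_normal_density) {..x}"

definition covmat :: "'a measure \<Rightarrow> ('a \<Rightarrow> real ^ 'd) \<Rightarrow> real ^ 'd ^ 'd" where
  "covmat M X = (\<chi> i j. integral\<^sup>L M (\<lambda>z. (X z $ i - integral\<^sup>L M (\<lambda>w. X w $ i))
                                      * (X z $ j - integral\<^sup>L M (\<lambda>w. X w $ j))))"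

end

theory Submission
  imports Defs
begin


abbreviation "NN \<equiv> density lborel std_normal_density"

lemma NN_real_dist: "real_distribution NN"
  unfolding real_distribution_def real_distribution_axioms_def
  using prob_space_normal_density by auto

lemma Phi_cdf: "Phi = cdf NN"
  by (auto simp: Phi_def cdf_def fun_eq_iff)

lemma Phi_mono: "x \<le> y \<Longrightarrow> Phi x \<le> Phi y"
  unfolding Phi_cdf using finite_borel_measure.cdf_nondecreasing[OF real_distribution.finite_borel_measure_M[OF NN_real_dist]] .

lemma Phi_nonneg: "0 \<le> Phi x"
  unfolding Phi_cdf using finite_borel_measure.cdf_nonneg[OF real_distribution.finite_borel_measure_M[OF NN_real_dist]] .

lemma Phi_le1: "Phi x \<le> 1"
  unfolding Phi_cdf using real_distribution.cdf_bounded_prob[OF NN_real_dist] .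

lemma Phi_top: "(Phi \<longlongrightarrow> 1) at_top"
  unfolding Phi_cdf using real_distribution.cdf_lim_at_top_prob[OF NN_real_dist] .

lemma Phi_bot: "(Phi \<longlongrightarrow> 0) at_bot"
  unfolding Phi_cdf using finite_borel_measure.cdf_lim_at_bot[OF real_distribution.finite_borel_measure_M[OF NN_real_dist]] .

lemma std_density_le1: "std_normal_density x \<le> 1"
proof -
  have "exp (- x\<^sup>2 / 2) \<le> 1" by simp
  moreover have "1 / sqrt (2 * pi) \<le> 1" using pi_gt3 by (simp add: divide_le_eq_1)
  ultimately have "(1 / sqrt (2 * pi)) * exp (- x\<^sup>2 / 2) \<le> 1 * 1"
    by (intro mult_mono) auto
  then show ?thesis by (simp add: std_normal_density_def)
qed

lemma Phi_lip: assumes "x \<le> y" shows "Phi y - Phi x \<le> y - x"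
proof -
  interpret P: prob_space NN by (rule prob_space_normal_density) simp
  have eq: "Phi y - Phi x = measure NN {x<..y}"
    unfolding Phi_cdf using finite_borel_measure.cdf_diff_eq[OF real_distribution.finite_borel_measure_M[OF NN_real_dist]] assms
    by (cases "x = y") auto
  have "emeasure NN {x<..y} = (\<integral>\<^sup>+ z. ennreal (std_normal_density z) * indicator {x<..y} z \<partial>lborel)"
    by (simp add: emeasure_density)
  also have "\<dots> \<le> (\<integral>\<^sup>+ z. indicator {x<..y} z \<partial>lborel)"
    by (intro nn_integral_mono) (auto simp: indicator_def std_density_le1)
  also have "\<dots> = ennreal (y - x)" using assms by simp
  finally have "emeasure NN {x<..y} \<le> ennreal (y - x)" .
  then have "measure NN {x<..y} \<le> y - x"
    using assms by (simp add: P.emeasure_eq_measure)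
  then show ?thesis by (simp add: eq)
qed

lemma Phi_abs: "\<bar>Phi y - Phi x\<bar> \<le> \<bar>y - x\<bar>"
  using Phi_lip[of x y] Phi_lip[of y x] Phi_mono[of x y] Phi_mono[of y x]
  by (cases "x \<le> y") auto

lemma Phi_neg: "Phi (- x) = 1 - Phi x"
proof -
  interpret P: prob_space NN by (rule prob_space_normal_density) simp
  have d: "distributed NN lborel (\<lambda>z. z) std_normal_density"
    unfolding distributed_def by (auto simp: distr_id2)
  have "distributed NN lborel (\<lambda>z. 0 + (-1) * z) (normal_density (0 + (-1) * 0) (\<bar>-1\<bar> * 1))"
    by (rule P.normal_density_affine[OF d]) auto
  then have "distr NN lborel uminus = NN"
    unfolding distributed_def by simp
  then have "measure NN {..-x} = measure (distr NN lborel uminus) {..-x}" by simp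
  also have "\<dots> = measure NN (uminus -` {..-x} \<inter> space NN)"
    by (rule measure_distr) auto
  also have "uminus -` {..-x} \<inter> space NN = {x..}" by auto
  also have "{x..} = UNIV - {..<x}" by auto
  also have "measure NN (UNIV - {..<x}) = 1 - measure NN {..<x}"
    using P.prob_compl[of "{..<x}"] by simp
  also have "measure NN {..<x} = measure NN {..x}"
  proof -
    have "measure NN {x} = 0"
    proof (rule antisym)
      show "measure NN {x} \<le> 0"
      proof (rule field_le_epsilon)
        fix e :: real assume e: "e > 0"
        have "measure NN {x} \<le> measure NN {x - e<..x}"
          using e by (intro P.finite_measure_mono) auto
        also have "\<dots> = Phi x - Phi (x - e)"
          unfolding Phi_cdf using finite_borel_measure.cdf_diff_eq[OF real_distribution.finite_borel_measure_M[OF NN_real_dist], of "x-e" x] e by auto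
        also have "\<dots> \<le> e" using Phi_lip[of "x-e" x] e by auto
        finally show "measure NN {x} \<le> 0 + e" by simp
      qed
    qed simp
    moreover have "measure NN {..x} = measure NN {..<x} + measure NN {x}"
      by (subst P.finite_measure_Union[symmetric]) (auto intro!: arg_cong[where f="measure NN"])
    ultimately show ?thesis by simp
  qed
  finally show ?thesis by (simp add: Phi_def)
qed

lemma Phi_scale:
  assumes d: "(\<delta>::real) > 0"
  shows "\<exists>\<eta>>0. \<eta> \<le> 1/2 \<and> (\<forall>x y. \<bar>y - x\<bar> \<le> \<eta> * \<bar>x\<bar> \<longrightarrow> \<bar>Phi y - Phi x\<bar> \<le> \<delta>)"
proof -
  from Phi_top d obtain L1 where L1: "\<And>z. z \<ge> L1 \<Longrightarrow> dist (Phi z) 1 < \<delta>"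
    unfolding tendsto_iff eventually_at_top_linorder by blast
  from Phi_bot d obtain L2 where L2: "\<And>z. z \<le> L2 \<Longrightarrow> dist (Phi z) 0 < \<delta>"
    unfolding tendsto_iff eventually_at_bot_linorder by blast
  define L where "L = max 1 (max (2 * L1) (- 2 * L2))"
  have L: "L \<ge> 1" "L/2 \<ge> L1" "-L/2 \<le> L2" unfolding L_def by auto
  define \<eta> where "\<eta> = min (1/2) (\<delta> / L)"
  have \<eta>: "\<eta> > 0" "\<eta> \<le> 1/2" "\<eta> * L \<le> \<delta>"
    using d L unfolding \<eta>_def by (auto simp: field_simps min_def)
  show ?thesis
  proof (intro exI[of _ \<eta>] conjI allI impI \<eta>(1,2))
    fix x y :: real assume xy: "\<bar>y - x\<bar> \<le> \<eta> * \<bar>x\<bar>"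
    show "\<bar>Phi y - Phi x\<bar> \<le> \<delta>"
    proof (cases "\<bar>x\<bar> \<le> L")
      case True
      have "\<eta> * \<bar>x\<bar> \<le> \<eta> * L" using True \<eta> by (intro mult_left_mono) auto
      then show ?thesis using Phi_abs[of y x] xy \<eta> by linarith
    next
      case False
      show ?thesis
      proof (cases "x > 0")
        case True
        have "\<eta> * \<bar>x\<bar> \<le> (1/2) * \<bar>x\<bar>" using \<eta> True by (intro mult_right_mono) auto
        moreover have "\<bar>x\<bar> = x" using True by simp
        ultimately have "y \<ge> L/2" "x \<ge> L/2" using xy True False by linarith+
        then have "dist (Phi y) 1 < \<delta>" "dist (Phi x) 1 < \<delta>" using L1 L by auto
        then show ?thesis using Phi_le1[of x] Phi_le1[of y] by (auto simp: dist_real_def)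
      next
        case neg: False
        have "\<eta> * \<bar>x\<bar> \<le> (1/2) * \<bar>x\<bar>" using \<eta> neg by (intro mult_right_mono) auto
        moreover have "\<bar>x\<bar> = -x" using neg by simp
        ultimately have "y \<le> -L/2" "x \<le> -L/2" using xy neg False by linarith+
        then have "dist (Phi y) 0 < \<delta>" "dist (Phi x) 0 < \<delta>" using L2 L by auto
        then show ?thesis using Phi_nonneg[of x] Phi_nonneg[of y] by (auto simp: dist_real_def)
      qed
    qed
  qed
qed



lemma linf_ge: "\<bar>y $ i\<bar> \<le> linfnorm (y :: real ^ 'd)"
  unfolding linfnorm_def by (rule Max_ge) auto

lemma linf_nonneg: "0 \<le> linfnorm (y :: real ^ 'd)"
  using linf_ge[of y] abs_ge_zero order_trans by blast

lemma l1_nonneg: "0 \<le> l1norm (y :: real ^ 'd)"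
  unfolding l1norm_def by (rule sum_nonneg) auto

lemma dot_l1_linf: "\<bar>x \<bullet> y\<bar> \<le> l1norm x * linfnorm (y :: real ^ 'd)"
proof -
  have "\<bar>x \<bullet> y\<bar> = \<bar>\<Sum>i\<in>UNIV. x $ i * y $ i\<bar>" by (simp add: inner_vec_def)
  also have "\<dots> \<le> (\<Sum>i\<in>UNIV. \<bar>x $ i * y $ i\<bar>)" by (rule sum_abs)
  also have "\<dots> \<le> (\<Sum>i\<in>UNIV. \<bar>x $ i\<bar> * linfnorm y)"
    by (intro sum_mono) (auto simp: abs_mult intro: mult_left_mono linf_ge)
  also have "\<dots> = l1norm x * linfnorm y" by (simp add: l1norm_def sum_distrib_right)
  finally show ?thesis .
qed

lemma dot_linf_l1: "\<bar>x \<bullet> y\<bar> \<le> linfnorm x * l1norm (y :: real ^ 'd)"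
  using dot_l1_linf[of y x] by (simp add: inner_commute mult.commute)

lemma l1_triangle: "l1norm (x + y) \<le> l1norm x + l1norm (y :: real ^ 'd)"
  unfolding l1norm_def by (simp add: sum.distrib[symmetric] sum_mono abs_triangle_ineq)

lemma setc_nth[simp]: "setc k b c $ i = (if i = k then c else b $ i)"
  by (simp add: setc_def)

lemma setc_same: "setc k b (b $ k) = b"
  by (simp add: vec_eq_iff)

lemma setc_setc[simp]: "setc k (setc k b c0) c = setc k b c"
  by (simp add: vec_eq_iff)

lemma setc_decomp: "setc k b c = setc k b (\<beta> $ k) + (c - \<beta> $ k) *\<^sub>R axis k 1"
  by (simp add: vec_eq_iff axis_def)

lemma l1_axis: "l1norm (a *\<^sub>R axis k (1::real)) = \<bar>a\<bar>"
proof -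
  have "(\<Sum>i\<in>UNIV. \<bar>(a *\<^sub>R axis k (1::real)) $ i\<bar>) = (\<Sum>i\<in>UNIV. if i = k then \<bar>a\<bar> else 0)"
    by (intro sum.cong) (auto simp: axis_def)
  then show ?thesis by (simp add: l1norm_def)
qed

lemma l1_setc_theta: "l1norm (setc k b (\<beta> $ k) - \<beta>) \<le> l1norm (b - (\<beta>::real^'d))"
  unfolding l1norm_def by (intro sum_mono) auto

lemma l1_setc: "l1norm (setc k b c - \<beta>) \<le> l1norm (b - (\<beta>::real^'d)) + \<bar>c - \<beta> $ k\<bar>"
proof -
  have "setc k b c - \<beta> = (setc k b (\<beta> $ k) - \<beta>) + (c - \<beta> $ k) *\<^sub>R axis k 1"
    by (subst setc_decomp[of k b c \<beta>]) simp
  then have "l1norm (setc k b c - \<beta>) \<le> l1norm (setc k b (\<beta> $ k) - \<beta>) + l1norm ((c - \<beta> $ k) *\<^sub>R axis k 1)"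
    using l1_triangle by metis
  then show ?thesis using l1_setc_theta[of k b \<beta>] l1_axis[of "c - \<beta> $ k" k] by linarith
qed

lemma dot_axis_mv: "u \<bullet> ((A :: real^'d^'d) *v axis k 1) = (u v* A) $ k"
  by (simp add: dot_lmul_matrix[symmetric] inner_axis)

lemma row_inv_axis:
  assumes "invertible (E :: real^'d^'d)"
  shows "row k (matrix_inv E) v* E = axis k 1"
proof -
  have "matrix_inv E ** E = mat 1"
    using assms unfolding invertible_def matrix_inv_def by (rule someI2_ex) auto
  then have "row k (matrix_inv E) v* E = row k (mat 1 :: real^'d^'d)"
  proof -
    have "row k (matrix_inv E) v* E = row k (matrix_inv E ** E)"
      by (simp add: row_def vector_matrix_mult_def matrix_matrix_mult_def vec_eq_iff)
    then show ?thesis using \<open>matrix_inv E ** E = mat 1\<close> by simp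
  qed
  then show ?thesis by (simp add: row_def mat_def axis_def vec_eq_iff)
qed



lemma MVT_any:
  fixes f f' :: "real \<Rightarrow> real"
  assumes der: "\<And>x. \<bar>x - a\<bar> \<le> \<bar>b - a\<bar> \<Longrightarrow> DERIV f x :> f' x"
  shows "\<exists>\<xi>. \<bar>\<xi> - a\<bar> \<le> \<bar>b - a\<bar> \<and> f b - f a = (b - a) * f' \<xi>"
proof (cases a b rule: linorder_cases)
  case less
  from MVT2[OF less, of f f'] der less obtain z where "a < z" "z < b" "f b - f a = (b - a) * f' z"
    by auto
  then show ?thesis by (intro exI[of _ z]) auto
next
  case equal then show ?thesis by auto
next
  case greater
  from MVT2[OF greater, of f f'] der greater obtain z where "b < z" "z < a" "f a - f b = (a - b) * f' z"
    by auto
  then show ?thesis by (intro exI[of _ z]) (auto simp: algebra_simps)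
qed

lemma setc_has_derivative:
  "((\<lambda>c. setc k b c) has_derivative (\<lambda>h. h *\<^sub>R axis k (1::real))) (at c)"
proof -
  have eq: "(\<lambda>c. setc k b 0 + c *\<^sub>R axis k 1) = (\<lambda>c. setc k b c)"
    by (rule ext) (simp add: vec_eq_iff axis_def)
  have "((\<lambda>c. setc k b 0 + c *\<^sub>R axis k 1) has_derivative (\<lambda>h. h *\<^sub>R axis k (1::real))) (at c)"
    by (rule has_derivative_eq_rhs, (rule derivative_intros)+) auto
  then show ?thesis by (simp only: eq)
qed

lemma g_deriv:
  fixes tt :: "real ^ 'd \<Rightarrow> real ^ 'd" and TT :: "real ^ 'd \<Rightarrow> real ^ 'd ^ 'd"
  assumes td: "\<And>b. (tt has_derivative (\<lambda>h. TT b *v h)) (at b)"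
  shows "((\<lambda>c. u \<bullet> tt (setc k b c)) has_real_derivative ((u v* TT (setc k b c)) $ k)) (at c)"
proof -
  have "((\<lambda>c. tt (setc k b c)) has_derivative (\<lambda>h. TT (setc k b c) *v (h *\<^sub>R axis k 1))) (at c)"
    using diff_chain_at[OF setc_has_derivative td] by (simp add: o_def)
  then have "((\<lambda>c. u \<bullet> tt (setc k b c)) has_derivative (\<lambda>h. u \<bullet> (TT (setc k b c) *v (h *\<^sub>R axis k 1)))) (at c)"
    by (rule has_derivative_inner_right)
  then have "((\<lambda>c. u \<bullet> tt (setc k b c)) has_derivative (\<lambda>h. (u v* TT (setc k b c)) $ k * h)) (at c)"
  proof (rule has_derivative_eq_rhs)
    show "(\<lambda>h. u \<bullet> (TT (setc k b c) *v (h *\<^sub>R axis k 1))) = (\<lambda>h. (u v* TT (setc k b c)) $ k * h)"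
    proof
      fix h
      have "u \<bullet> (TT (setc k b c) *v (h *\<^sub>R axis k 1)) = h * (u \<bullet> (TT (setc k b c) *v axis k 1))"
        by (simp only: matrix_vector_mult_scaleR inner_scaleR_right)
      also have "\<dots> = h * (u v* TT (setc k b c)) $ k" by (simp only: dot_axis_mv)
      finally show "u \<bullet> (TT (setc k b c) *v (h *\<^sub>R axis k 1)) = (u v* TT (setc k b c)) $ k * h"
        by simp
    qed
  qed
  then show ?thesis by (simp add: has_field_derivative_def)
qed

lemma vm_comp_linear: "bounded_linear (\<lambda>M::real^'d^'d. (u v* M) $ k)"
proof -
  have "linear (\<lambda>M::real^'d^'d. (u v* M) $ k)"
    by (rule linearI) (auto simp: vector_matrix_mult_def sum.distrib algebra_simps sum_distrib_left)
  then show ?thesis by (rule linear_conv_bounded_linear[THEN iffD1])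
qed

lemma h_differentiable:
  fixes TT :: "real ^ 'd \<Rightarrow> real ^ 'd ^ 'd"
  assumes Td: "\<And>b. TT differentiable (at b)"
  shows "(\<lambda>c. (u v* TT (setc k b c)) $ k) differentiable (at c)"
proof -
  have "(\<lambda>c. setc k b c) differentiable (at c)"
    using setc_has_derivative unfolding differentiable_def by blast
  then have "(TT \<circ> (\<lambda>c. setc k b c)) differentiable (at c)"
    by (rule differentiable_chain_at) (rule Td)
  then have "((\<lambda>M. (u v* M) $ k) \<circ> (TT \<circ> (\<lambda>c. setc k b c))) differentiable (at c)"
    by (rule differentiable_chain_at)
       (rule bounded_linear_imp_differentiable[OF vm_comp_linear])
  then show ?thesis by (simp add: o_def)
qed

lemma seg_deriv:
  fixes tt :: "real ^ 'd \<Rightarrow> real ^ 'd" and TT :: "real ^ 'd \<Rightarrow> real ^ 'd ^ 'd"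
  assumes td: "\<And>b. (tt has_derivative (\<lambda>h. TT b *v h)) (at b)"
  shows "((\<lambda>\<nu>. u \<bullet> tt (\<nu> *\<^sub>R p + (1 - \<nu>) *\<^sub>R q)) has_real_derivative
          ((u v* TT (\<nu> *\<^sub>R p + (1 - \<nu>) *\<^sub>R q)) \<bullet> (p - q))) (at \<nu>)"
proof -
  have eq: "(\<lambda>\<nu>. \<nu> *\<^sub>R p + (1 - \<nu>) *\<^sub>R q) = (\<lambda>\<nu>. q + \<nu> *\<^sub>R (p - q))"
    by (auto simp: fun_eq_iff algebra_simps)
  have s: "((\<lambda>\<nu>. \<nu> *\<^sub>R p + (1 - \<nu>) *\<^sub>R q) has_derivative (\<lambda>h. h *\<^sub>R (p - q))) (at \<nu>)"
    unfolding eq by (auto intro!: derivative_eq_intros)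
  have "((\<lambda>\<nu>. tt (\<nu> *\<^sub>R p + (1 - \<nu>) *\<^sub>R q)) has_derivative
         (\<lambda>h. TT (\<nu> *\<^sub>R p + (1 - \<nu>) *\<^sub>R q) *v (h *\<^sub>R (p - q)))) (at \<nu>)"
    using diff_chain_at[OF s td] by (simp add: o_def)
  then have "((\<lambda>\<nu>. u \<bullet> tt (\<nu> *\<^sub>R p + (1 - \<nu>) *\<^sub>R q)) has_derivative
         (\<lambda>h. u \<bullet> (TT (\<nu> *\<^sub>R p + (1 - \<nu>) *\<^sub>R q) *v (h *\<^sub>R (p - q))))) (at \<nu>)"
    by (rule has_derivative_inner_right)
  then have "((\<lambda>\<nu>. u \<bullet> tt (\<nu> *\<^sub>R p + (1 - \<nu>) *\<^sub>R q)) has_derivative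
         (\<lambda>h. ((u v* TT (\<nu> *\<^sub>R p + (1 - \<nu>) *\<^sub>R q)) \<bullet> (p - q)) * h)) (at \<nu>)"
  proof (rule has_derivative_eq_rhs)
    show "(\<lambda>h. u \<bullet> (TT (\<nu> *\<^sub>R p + (1 - \<nu>) *\<^sub>R q) *v (h *\<^sub>R (p - q)))) =
          (\<lambda>h. ((u v* TT (\<nu> *\<^sub>R p + (1 - \<nu>) *\<^sub>R q)) \<bullet> (p - q)) * h)"
    proof
      fix h
      show "u \<bullet> (TT (\<nu> *\<^sub>R p + (1 - \<nu>) *\<^sub>R q) *v (h *\<^sub>R (p - q))) =
          ((u v* TT (\<nu> *\<^sub>R p + (1 - \<nu>) *\<^sub>R q)) \<bullet> (p - q)) * h"
        by (simp only: matrix_vector_mult_scaleR inner_scaleR_right dot_lmul_matrix mult.commute)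
    qed
  qed
  then show ?thesis by (simp add: has_field_derivative_def)
qed



lemma core:
  fixes tt :: "real^'d \<Rightarrow> real^'d" and TT :: "real^'d \<Rightarrow> real^'d^'d"
    and \<beta> bh vh v :: "real^'d" and k :: 'd
  assumes td: "\<And>b. (tt has_derivative (\<lambda>h. TT b *v h)) (at b)"
    and Td: "\<And>b. TT differentiable (at b)"
    and root: "(continuous_on UNIV (\<lambda>c. vh \<bullet> tt (setc k bh c)) \<and>
           {c. vh \<bullet> tt (setc k bh c) = 0} = {th})
        \<or> (mono (\<lambda>c. vh \<bullet> tt (setc k bh c)) \<and> vh \<bullet> tt (setc k bh th) = 0)"
    and e1: "l1norm (bh - \<beta>) \<le> r1"
    and e2: "l1norm (vh - v) \<le> r2"
    and e3: "linfnorm (tt \<beta>) \<le> r3"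
    and e4: "\<bar>v \<bullet> tt \<beta>\<bar> \<le> r4"
    and e5: "\<forall>\<nu>\<in>{0..1::real}. linfnorm (vh v* TT (\<nu> *\<^sub>R setc k bh (\<beta> $ k) + (1 - \<nu>) *\<^sub>R \<beta>) - axis k 1) \<le> r5"
    and psi: "\<And>bc. l1norm (bc - \<beta>) < \<gamma> \<Longrightarrow>
               \<bar>deriv (\<lambda>c. \<Sum>i\<in>UNIV. vh $ i * TT (setc k bc c) $ i $ k) (bc $ k)\<bar> \<le> K"
    and s1: "r1 + \<epsilon> < \<gamma>" and s2: "r5 + K * \<epsilon> \<le> \<tau>" and s3: "\<tau> \<le> 1/2"
    and s4: "r4 + r1 * r5 + r2 * r3 < \<epsilon> / 2" and s5: "\<epsilon> > 0"
  shows "\<exists>D. \<bar>D - 1\<bar> \<le> \<tau> \<and> th - \<beta> $ k = - (vh \<bullet> tt (setc k bh (\<beta> $ k))) / D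
            \<and> \<bar>vh \<bullet> tt (setc k bh (\<beta> $ k)) - v \<bullet> tt \<beta>\<bar> \<le> r1 * r5 + r2 * r3"
proof -
  define \<theta> where "\<theta> = \<beta> $ k"
  define g where "g c = vh \<bullet> tt (setc k bh c)" for c
  define h where "h c = (vh v* TT (setc k bh c)) $ k" for c
  define b\<theta> where "b\<theta> = setc k bh \<theta>"
  have G1: "DERIV g c :> h c" for c unfolding g_def h_def by (rule g_deriv[OF td])
  have H1: "DERIV h c :> deriv h c" for c
    using h_differentiable[OF Td] unfolding h_def
    by (simp add: DERIV_deriv_iff_real_differentiable)
  have l10: "l1norm (0::real^'d) = 0" by (simp add: l1norm_def)
  have K0: "0 \<le> K" using psi[of \<beta>] l10 s1 s5 e1 l1_nonneg[of "bh - \<beta>"] by auto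
  have r5pos: "0 \<le> r5" using e5 linf_nonneg by (meson atLeastAtMost_iff order_trans zero_le_one order_refl)
  have r1pos: "0 \<le> r1" using e1 l1_nonneg order_trans by blast
  have H2: "\<bar>deriv h c\<bar> \<le> K" if "\<bar>c - \<theta>\<bar> \<le> \<epsilon>" for c
  proof -
    have eqh: "h = (\<lambda>c'. \<Sum>i\<in>UNIV. vh $ i * TT (setc k (setc k bh c) c') $ i $ k)"
      by (rule ext) (simp add: h_def vector_matrix_mult_def)
    have "l1norm (setc k bh c - \<beta>) \<le> l1norm (bh - \<beta>) + \<bar>c - \<theta>\<bar>"
      using l1_setc[of k bh c \<beta>] by (simp add: \<theta>_def)
    then have "l1norm (setc k bh c - \<beta>) < \<gamma>" using that e1 s1 by linarith
    from psi[OF this] show ?thesis by (simp add: eqh)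
  qed
  have H3: "\<bar>h \<theta> - 1\<bar> \<le> r5"
  proof -
    have "linfnorm (vh v* TT (1 *\<^sub>R setc k bh (\<beta> $ k) + (1 - 1) *\<^sub>R \<beta>) - axis k 1) \<le> r5"
      using e5 by (metis atLeastAtMost_iff order_refl zero_le_one)
    then have "linfnorm (vh v* TT b\<theta> - axis k 1) \<le> r5" by (simp add: b\<theta>_def \<theta>_def)
    moreover have "\<bar>(vh v* TT b\<theta> - axis k 1) $ k\<bar> \<le> linfnorm (vh v* TT b\<theta> - axis k 1)"
      by (rule linf_ge)
    ultimately show ?thesis by (simp add: h_def b\<theta>_def axis_def)
  qed
  have H4: "\<bar>h c - 1\<bar> \<le> \<tau>" if "\<bar>c - \<theta>\<bar> \<le> \<epsilon>" for c
  proof -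
    obtain \<xi> where \<xi>: "\<bar>\<xi> - \<theta>\<bar> \<le> \<bar>c - \<theta>\<bar>" "h c - h \<theta> = (c - \<theta>) * deriv h \<xi>"
      using MVT_any[of \<theta> c h "deriv h"] H1 by blast
    have "\<bar>deriv h \<xi>\<bar> \<le> K" using H2 \<xi>(1) that by auto
    then have "\<bar>(c - \<theta>) * deriv h \<xi>\<bar> \<le> \<epsilon> * K"
      unfolding abs_mult using that by (intro mult_mono) auto
    then show ?thesis using \<xi>(2) H3 s2 by (simp add: algebra_simps)
  qed
  have G2: "\<exists>D. \<bar>D - 1\<bar> \<le> \<tau> \<and> g c - g \<theta> = (c - \<theta>) * D" if "\<bar>c - \<theta>\<bar> \<le> \<epsilon>" for c
  proof -
    obtain \<xi> where \<xi>: "\<bar>\<xi> - \<theta>\<bar> \<le> \<bar>c - \<theta>\<bar>" "g c - g \<theta> = (c - \<theta>) * h \<xi>"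
      using MVT_any[of \<theta> c g h] G1 by blast
    show ?thesis using H4[of \<xi>] \<xi> that by auto
  qed
  define f where "f \<nu> = vh \<bullet> tt (\<nu> *\<^sub>R b\<theta> + (1 - \<nu>) *\<^sub>R \<beta>)" for \<nu>
  obtain z where z: "0 < z" "z < 1"
    "f 1 - f 0 = (1 - 0) * ((vh v* TT (z *\<^sub>R b\<theta> + (1 - z) *\<^sub>R \<beta>)) \<bullet> (b\<theta> - \<beta>))"
    using MVT2[of 0 1 f "\<lambda>\<nu>. (vh v* TT (\<nu> *\<^sub>R b\<theta> + (1 - \<nu>) *\<^sub>R \<beta>)) \<bullet> (b\<theta> - \<beta>)"]
      seg_deriv[OF td] unfolding f_def by auto
  define M where "M = vh v* TT (z *\<^sub>R b\<theta> + (1 - z) *\<^sub>R \<beta>)"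
  have "axis k 1 \<bullet> (b\<theta> - \<beta>) = 0" by (simp add: inner_axis' b\<theta>_def \<theta>_def)
  then have "M \<bullet> (b\<theta> - \<beta>) = (M - axis k 1) \<bullet> (b\<theta> - \<beta>)" by (simp add: inner_diff_left)
  also have "\<bar>\<dots>\<bar> \<le> linfnorm (M - axis k 1) * l1norm (b\<theta> - \<beta>)" by (rule dot_linf_l1)
  also have "\<dots> \<le> r5 * r1"
  proof (rule mult_mono)
    show "linfnorm (M - axis k 1) \<le> r5" using e5 z unfolding M_def b\<theta>_def \<theta>_def by auto
    show "l1norm (b\<theta> - \<beta>) \<le> r1" using l1_setc_theta[of k bh \<beta>] e1 unfolding b\<theta>_def \<theta>_def by linarith
  qed (auto simp: r5pos l1_nonneg)
  finally have seg: "\<bar>f 1 - f 0\<bar> \<le> r5 * r1" using z(3) M_def by simp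
  have f1: "f 1 = g \<theta>" by (simp add: f_def g_def b\<theta>_def)
  have f0: "f 0 = vh \<bullet> tt \<beta>" by (simp add: f_def)
  have "\<bar>(vh - v) \<bullet> tt \<beta>\<bar> \<le> l1norm (vh - v) * linfnorm (tt \<beta>)" by (rule dot_l1_linf)
  also have "\<dots> \<le> r2 * r3" using e2 e3 l1_nonneg[of "vh - v"] linf_nonneg[of "tt \<beta>"] by (intro mult_mono) auto
  finally have rem2: "\<bar>(vh - v) \<bullet> tt \<beta>\<bar> \<le> r2 * r3" .
  have "g \<theta> - v \<bullet> tt \<beta> = (vh - v) \<bullet> tt \<beta> + (f 1 - f 0)"
    by (simp add: f1 f0 inner_diff_left)
  then have REM: "\<bar>g \<theta> - v \<bullet> tt \<beta>\<bar> \<le> r1 * r5 + r2 * r3"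
    using rem2 seg by (simp add: mult.commute)
  have gsmall: "\<bar>g \<theta>\<bar> < \<epsilon> / 2" using REM e4 s4 by linarith
  have gp: "g (\<theta> + \<epsilon>) > 0"
  proof -
    obtain D where D: "\<bar>D - 1\<bar> \<le> \<tau>" "g (\<theta> + \<epsilon>) - g \<theta> = (\<theta> + \<epsilon> - \<theta>) * D"
      using G2[of "\<theta> + \<epsilon>"] s5 by auto
    have "\<epsilon> * D \<ge> \<epsilon> * (1/2)" using D(1) s3 s5 by (intro mult_left_mono) auto
    then show ?thesis using D(2) gsmall by auto
  qed
  have gm: "g (\<theta> - \<epsilon>) < 0"
  proof -
    obtain D where D: "\<bar>D - 1\<bar> \<le> \<tau>" "g (\<theta> - \<epsilon>) - g \<theta> = (\<theta> - \<epsilon> - \<theta>) * D"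
      using G2[of "\<theta> - \<epsilon>"] s5 by auto
    have "\<epsilon> * D \<ge> \<epsilon> * (1/2)" using D(1) s3 s5 by (intro mult_left_mono) auto
    then show ?thesis using D(2) gsmall by auto
  qed
  have gfun: "g = (\<lambda>c. vh \<bullet> tt (setc k bh c))" by (rule ext) (simp add: g_def)
  have root': "(continuous_on UNIV g \<and> {c. g c = 0} = {th}) \<or> (mono g \<and> g th = 0)"
    using root by (simp only: gfun)
  have loc: "\<bar>th - \<theta>\<bar> \<le> \<epsilon>"
    using root'
  proof
    assume A: "continuous_on UNIV g \<and> {c. g c = 0} = {th}"
    have "continuous_on {\<theta> - \<epsilon>..\<theta> + \<epsilon>} g" using A continuous_on_subset by blast
    then obtain x where x: "\<theta> - \<epsilon> \<le> x" "x \<le> \<theta> + \<epsilon>" "g x = 0"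
      using IVT'[of g "\<theta> - \<epsilon>" 0 "\<theta> + \<epsilon>"] gp gm s5 by auto
    then have "x \<in> {c. g c = 0}" by simp
    then have "x = th" using A by auto
    then show ?thesis using x by auto
  next
    assume A: "mono g \<and> g th = 0"
    have "\<not> th \<ge> \<theta> + \<epsilon>"
    proof
      assume "th \<ge> \<theta> + \<epsilon>"
      then have "g (\<theta> + \<epsilon>) \<le> g th" using A unfolding mono_def by blast
      then show False using gp A by auto
    qed
    moreover have "\<not> th \<le> \<theta> - \<epsilon>"
    proof
      assume "th \<le> \<theta> - \<epsilon>"
      then have "g th \<le> g (\<theta> - \<epsilon>)" using A unfolding mono_def by blast
      then show False using gm A by auto
    qed
    ultimately show ?thesis by auto
  qed
  have gth: "g th = 0"
    using root'
  proof
    assume A: "continuous_on UNIV g \<and> {c. g c = 0} = {th}"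
    then show ?thesis by (metis mem_Collect_eq singletonI)
  qed simp
  obtain D where D: "\<bar>D - 1\<bar> \<le> \<tau>" "g th - g \<theta> = (th - \<theta>) * D"
    using G2[OF loc] by auto
  have "D \<noteq> 0" using D(1) s3 by auto
  then have "th - \<theta> = - g \<theta> / D" using D(2) gth by (simp add: field_simps)
  then show ?thesis using D(1) REM unfolding g_def \<theta>_def by auto
qed



lemma inf_nonneg:
  assumes "S \<noteq> {}" "\<And>x. x \<in> S \<Longrightarrow> (0::real) \<le> f x"
  shows "0 \<le> (INF x\<in>S. f x)"
  using assms by (intro cINF_greatest) auto

lemma inf_lower:
  assumes "x \<in> S" "\<And>x. x \<in> S \<Longrightarrow> (0::real) \<le> f x"
  shows "(INF x\<in>S. f x) \<le> f x"
  using assms by (intro cINF_lower) (auto intro!: bdd_belowI[of _ 0])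

lemma inf_to_1:
  assumes lim: "(\<lambda>n. INF \<beta>\<in>\<Omega>. (f n \<beta>::real)) \<longlonglongrightarrow> 1"
    and pos: "\<And>n \<beta>. \<beta> \<in> \<Omega> \<Longrightarrow> 0 \<le> f n \<beta>" and d: "\<delta> > 0"
  shows "\<forall>\<^sub>F n in sequentially. \<forall>\<beta>\<in>\<Omega>. 1 - \<delta> \<le> f n \<beta>"
proof -
  have "\<forall>\<^sub>F n in sequentially. (INF \<beta>\<in>\<Omega>. f n \<beta>) > 1 - \<delta>"
    using lim d by (intro order_tendstoD) auto
  then show ?thesis
  proof (rule eventually_mono)
    fix n assume "(INF \<beta>\<in>\<Omega>. f n \<beta>) > 1 - \<delta>"
    then show "\<forall>\<beta>\<in>\<Omega>. 1 - \<delta> \<le> f n \<beta>"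
      using inf_lower[of _ \<Omega> "f n"] pos by force
  qed
qed

lemma sup_to_0:
  assumes lim: "(\<lambda>n. SUP \<beta>\<in>\<Omega>. SUP x. (F n \<beta> x::real)) \<longlonglongrightarrow> 0"
    and bnd: "\<And>n \<beta> x. \<beta> \<in> \<Omega> \<Longrightarrow> 0 \<le> F n \<beta> x \<and> F n \<beta> x \<le> B" and d: "\<delta> > 0"
  shows "\<forall>\<^sub>F n in sequentially. \<forall>\<beta>\<in>\<Omega>. \<forall>x. F n \<beta> x \<le> \<delta>"
proof -
  have "\<forall>\<^sub>F n in sequentially. (SUP \<beta>\<in>\<Omega>. SUP x. F n \<beta> x) < \<delta>"
    using lim d by (intro order_tendstoD) auto
  then show ?thesis
  proof (rule eventually_mono)
    fix n assume A: "(SUP \<beta>\<in>\<Omega>. SUP x. F n \<beta> x) < \<delta>"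
    show "\<forall>\<beta>\<in>\<Omega>. \<forall>x. F n \<beta> x \<le> \<delta>"
    proof (intro ballI allI)
      fix \<beta> x assume b: "\<beta> \<in> \<Omega>"
      have i: "F n \<beta> x \<le> (SUP x. F n \<beta> x)"
        using bnd[OF b] by (intro cSUP_upper) (auto intro!: bdd_aboveI[of _ B])
      have ii: "(SUP x. F n \<beta> x) \<le> (SUP \<beta>\<in>\<Omega>. SUP x. F n \<beta> x)"
      proof (rule cSUP_upper[OF b])
        show "bdd_above ((\<lambda>\<beta>. SUP x. F n \<beta> x) ` \<Omega>)"
          using bnd by (intro bdd_aboveI[of _ B]) (auto intro!: cSUP_least)
      qed
      show "F n \<beta> x \<le> \<delta>" using i ii A by linarith
    qed
  qed
qed

lemma sup_conv:
  assumes ne: "\<Omega> \<noteq> {}"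
    and pos: "\<And>n \<beta> x. \<beta> \<in> \<Omega> \<Longrightarrow> 0 \<le> (F n \<beta> x::real)"
    and ev: "\<And>\<delta>. \<delta> > 0 \<Longrightarrow> \<forall>\<^sub>F n in sequentially. \<forall>\<beta>\<in>\<Omega>. \<forall>x. F n \<beta> x \<le> \<delta>"
  shows "(\<lambda>n. SUP \<beta>\<in>\<Omega>. SUP x. F n \<beta> x) \<longlonglongrightarrow> 0"
proof (rule tendstoI)
  fix r :: real assume r: "r > 0"
  show "\<forall>\<^sub>F n in sequentially. dist (SUP \<beta>\<in>\<Omega>. SUP x. F n \<beta> x) 0 < r"
    using ev[of "r/2"] r
  proof -
    have "\<forall>\<^sub>F n in sequentially. \<forall>\<beta>\<in>\<Omega>. \<forall>x. F n \<beta> x \<le> r/2" using ev[of "r/2"] r by simp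
    then show ?thesis
  proof (rule eventually_mono)
    fix n assume A: "\<forall>\<beta>\<in>\<Omega>. \<forall>x. F n \<beta> x \<le> r/2"
    have up: "(SUP \<beta>\<in>\<Omega>. SUP x. F n \<beta> x) \<le> r/2"
      using A ne by (intro cSUP_least) auto
    obtain \<beta>0 where b0: "\<beta>0 \<in> \<Omega>" using ne by auto
    have "F n \<beta>0 undefined \<le> (SUP x. F n \<beta>0 x)"
      using A b0 by (intro cSUP_upper) (auto intro!: bdd_aboveI[of _ "r/2"])
    then have "0 \<le> (SUP x. F n \<beta>0 x)" using pos[OF b0, of n undefined] by linarith
    also have "\<dots> \<le> (SUP \<beta>\<in>\<Omega>. SUP x. F n \<beta> x)"
      using A b0 by (intro cSUP_upper) (auto intro!: bdd_aboveI[of _ "r/2"] cSUP_least)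
    finally show "dist (SUP \<beta>\<in>\<Omega>. SUP x. F n \<beta> x) 0 < r" using up r by (simp add: dist_real_def)
  qed
  qed
qed

lemma in_sets_of_pos: "measure M A > 0 \<Longrightarrow> A \<in> sets M"
  using measure_notin_sets by fastforce

lemma (in prob_space) prob_upper:
  assumes "S \<in> events" "G \<in> events" "T \<in> events" "\<And>Z. Z \<in> G \<Longrightarrow> Z \<in> S \<Longrightarrow> Z \<in> T"
  shows "prob S \<le> prob T + prob (space M - G)"
proof -
  have "S \<subseteq> T \<union> (space M - G)" using assms sets.sets_into_space by blast
  then have "prob S \<le> prob (T \<union> (space M - G))" using assms by (intro finite_measure_mono) auto
  also have "\<dots> \<le> prob T + prob (space M - G)" using assms by (intro measure_Un_le) auto
  finally show ?thesis .
qed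

lemma (in prob_space) prob_lower:
  assumes "S \<in> events" "G \<in> events" "T \<in> events" "\<And>Z. Z \<in> G \<Longrightarrow> Z \<in> T \<Longrightarrow> Z \<in> S"
  shows "prob T - prob (space M - G) \<le> prob S"
proof -
  have "T \<subseteq> S \<union> (space M - G)" using assms sets.sets_into_space by blast
  then have "prob T \<le> prob (S \<union> (space M - G))" using assms by (intro finite_measure_mono) auto
  also have "\<dots> \<le> prob S + prob (space M - G)" using assms by (intro measure_Un_le) auto
  finally show ?thesis by simp
qed

lemma (in prob_space) prob_compl_int:
  assumes "A \<in> events" "B \<in> events"
  shows "prob (space M - (A \<inter> B)) \<le> prob (space M - A) + prob (space M - B)"
proof -
  have "space M - (A \<inter> B) = (space M - A) \<union> (space M - B)" by auto
  then show ?thesis using assms by (simp add: measure_Un_le)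
qed

lemma (in prob_space) prob_ge_upper:
  fixes W :: "'a \<Rightarrow> real"
  assumes W: "W \<in> borel_measurable M" and r: "\<rho> > 0"
  shows "prob {Z \<in> space M. W Z \<ge> a} \<le> 1 - prob {Z \<in> space M. W Z \<le> a - \<rho>}"
proof -
  have "{Z \<in> space M. W Z \<ge> a} \<subseteq> space M - {Z \<in> space M. W Z \<le> a - \<rho>}" using r by auto
  then have "prob {Z \<in> space M. W Z \<ge> a} \<le> prob (space M - {Z \<in> space M. W Z \<le> a - \<rho>})"
    using W by (intro finite_measure_mono) auto
  also have "\<dots> = 1 - prob {Z \<in> space M. W Z \<le> a - \<rho>}"
    using W by (intro prob_compl) auto
  finally show ?thesis .
qed

lemma (in prob_space) prob_ge_lower:
  fixes W :: "'a \<Rightarrow> real"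
  assumes W: "W \<in> borel_measurable M"
  shows "1 - prob {Z \<in> space M. W Z \<le> a} \<le> prob {Z \<in> space M. W Z \<ge> a}"
proof -
  have "space M - {Z \<in> space M. W Z \<le> a} \<subseteq> {Z \<in> space M. W Z \<ge> a}" by auto
  then have "prob (space M - {Z \<in> space M. W Z \<le> a}) \<le> prob {Z \<in> space M. W Z \<ge> a}"
    using W by (intro finite_measure_mono) auto
  moreover have "prob (space M - {Z \<in> space M. W Z \<le> a}) = 1 - prob {Z \<in> space M. W Z \<le> a}"
    using W by (intro prob_compl) auto
  ultimately show ?thesis by simp
qed

lemma alg1:
  fixes U W R c x \<eta> \<rho> :: real
  assumes c: "c > 0" "\<bar>c - 1\<bar> \<le> \<eta>" and R: "\<bar>R\<bar> \<le> \<rho>" and U: "U = - (W + R) / c"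
  shows "(U \<le> x \<longrightarrow> W \<ge> - (x + \<eta> * \<bar>x\<bar>) - \<rho>) \<and> (W \<ge> - (x - \<eta> * \<bar>x\<bar>) + \<rho> \<longrightarrow> U \<le> x)"
proof -
  have e: "U \<le> x \<longleftrightarrow> - (W + R) \<le> c * x" using c unfolding U by (simp add: pos_divide_le_eq mult.commute)
  have "\<bar>c * x - x\<bar> = \<bar>c - 1\<bar> * \<bar>x\<bar>" by (simp add: abs_mult[symmetric] algebra_simps)
  also have "\<dots> \<le> \<eta> * \<bar>x\<bar>" using c by (intro mult_right_mono) auto
  finally have "\<bar>c * x - x\<bar> \<le> \<eta> * \<bar>x\<bar>" .
  then show ?thesis unfolding e using R by (auto simp: abs_le_iff)
qed

lemma alg2:
  fixes n s2 sh D g w :: real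
  assumes "s2 > 0" "sh > 0" "D \<noteq> 0"
  shows "sqrt n / sqrt sh * (- g / D) =
         - (sqrt n / sqrt s2 * w + sqrt n / sqrt s2 * (g - w)) / (D * sqrt (sh / s2))"
  using assms by (simp add: real_sqrt_divide field_simps)



theorem theorem3:
  fixes P :: "nat \<Rightarrow> real ^ 'd \<Rightarrow> 'z measure"
    and s :: nat and k :: 'd
    and t :: "nat \<Rightarrow> 'z \<Rightarrow> real ^ 'd \<Rightarrow> real ^ 'd"
    and T :: "nat \<Rightarrow> 'z \<Rightarrow> real ^ 'd \<Rightarrow> real ^ 'd ^ 'd"
    and Et :: "real ^ 'd \<Rightarrow> real ^ 'd \<Rightarrow> real ^ 'd"
    and ET :: "real ^ 'd \<Rightarrow> real ^ 'd \<Rightarrow> real ^ 'd ^ 'd"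
    and Sig :: "real ^ 'd \<Rightarrow> real ^ 'd ^ 'd"
    and v :: "real ^ 'd \<Rightarrow> real ^ 'd"
    and sigma2 :: "real ^ 'd \<Rightarrow> real"
    and lam lam' :: "nat \<Rightarrow> real"
    and betahat vhat :: "nat \<Rightarrow> 'z \<Rightarrow> real ^ 'd"
    and thetatilde sigma2hat :: "nat \<Rightarrow> 'z \<Rightarrow> real"
    and r1 r2 r3 r4 r5 r6 :: "nat \<Rightarrow> real"
    and \<Omega> :: "(real ^ 'd) set"
  defines "\<Omega> \<equiv> {\<beta>. l0norm \<beta> \<le> s}"
  assumes prob: "\<And>n \<beta>. \<beta> \<in> \<Omega> \<Longrightarrow> prob_space (P n \<beta>)"
    (* estimating equation: twice differentiable in b, T = dt/db *)
    and t_meas: "\<And>n \<beta> b. \<beta> \<in> \<Omega> \<Longrightarrow> (\<lambda>Z. t n Z b) \<in> borel_measurable (P n \<beta>)"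
    and T_meas: "\<And>n \<beta> b. \<beta> \<in> \<Omega> \<Longrightarrow> (\<lambda>Z. T n Z b) \<in> borel_measurable (P n \<beta>)"
    and t_deriv: "\<And>n Z b. (t n Z has_derivative (\<lambda>h. T n Z b *v h)) (at b)"
    and T_diff: "\<And>n Z b. T n Z differentiable (at b)"
    (* limits of expectations *)
    and Et_lim: "\<And>\<beta> b. \<beta> \<in> \<Omega> \<Longrightarrow> (\<forall>n. integrable (P n \<beta>) (\<lambda>Z. t n Z b)) \<and>
                   (\<lambda>n. integral\<^sup>L (P n \<beta>) (\<lambda>Z. t n Z b)) \<longlonglongrightarrow> Et \<beta> b"
    and ET_lim: "\<And>\<beta> b. \<beta> \<in> \<Omega> \<Longrightarrow> (\<forall>n. integrable (P n \<beta>) (\<lambda>Z. T n Z b)) \<and>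
                   (\<lambda>n. integral\<^sup>L (P n \<beta>) (\<lambda>Z. T n Z b)) \<longlonglongrightarrow> ET \<beta> b"
    and Et_root: "\<And>\<beta> b. \<beta> \<in> \<Omega> \<Longrightarrow> Et \<beta> b = 0 \<longleftrightarrow> b = \<beta>"
    and ET_inv: "\<And>\<beta>. \<beta> \<in> \<Omega> \<Longrightarrow> invertible (ET \<beta> \<beta>)"
    and v_def: "\<And>\<beta>. v \<beta> = row k (matrix_inv (ET \<beta> \<beta>))"
    (* asymptotic covariance and sigma^2 *)
    and Sig_lim: "\<And>\<beta>. \<beta> \<in> \<Omega> \<Longrightarrow>
                   (\<lambda>n. real n *\<^sub>R covmat (P n \<beta>) (\<lambda>Z. t n Z \<beta>)) \<longlonglongrightarrow> Sig \<beta>"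
    and sigma2_def: "\<And>\<beta>. sigma2 \<beta> = v \<beta> \<bullet> (Sig \<beta> *v v \<beta>)"
    (* the estimators *)
    and betahat_def: "\<And>n Z. (\<exists>b. linfnorm (t n Z b) \<le> lam n) \<Longrightarrow>
                   linfnorm (t n Z (betahat n Z)) \<le> lam n \<and>
                   (\<forall>b. linfnorm (t n Z b) \<le> lam n \<longrightarrow> l1norm (betahat n Z) \<le> l1norm b)"
    and vhat_def: "\<And>n Z. (\<exists>u. linfnorm (u v* T n Z (betahat n Z) - axis k 1) \<le> lam' n) \<Longrightarrow>
                   linfnorm (vhat n Z v* T n Z (betahat n Z) - axis k 1) \<le> lam' n \<and>
                   (\<forall>u. linfnorm (u v* T n Z (betahat n Z) - axis k 1) \<le> lam' n \<longrightarrow>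
                        l1norm (vhat n Z) \<le> l1norm u)"
    and thetatilde_root: "\<And>n Z.
          (continuous_on UNIV (\<lambda>c. vhat n Z \<bullet> t n Z (setc k (betahat n Z) c)) \<and>
           {c. vhat n Z \<bullet> t n Z (setc k (betahat n Z) c) = 0} = {thetatilde n Z})
        \<or> (mono (\<lambda>c. vhat n Z \<bullet> t n Z (setc k (betahat n Z) c)) \<and>
           vhat n Z \<bullet> t n Z (setc k (betahat n Z) (thetatilde n Z)) = 0)"
    and thetatilde_meas: "\<And>n \<beta>. \<beta> \<in> \<Omega> \<Longrightarrow> thetatilde n \<in> borel_measurable (P n \<beta>)"
    and sigma2hat_meas: "\<And>n \<beta>. \<beta> \<in> \<Omega> \<Longrightarrow> sigma2hat n \<in> borel_measurable (P n \<beta>)"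
    (* (UA1) *)
    and UA1a: "(\<lambda>n. INF \<beta>\<in>\<Omega>. prob_space.prob (P n \<beta>)
                 {Z \<in> space (P n \<beta>). l1norm (betahat n Z - \<beta>) \<le> r1 n}) \<longlonglongrightarrow> 1"
    and UA1b: "(\<lambda>n. INF \<beta>\<in>\<Omega>. prob_space.prob (P n \<beta>)
                 {Z \<in> space (P n \<beta>). l1norm (vhat n Z - v \<beta>) \<le> r2 n}) \<longlonglongrightarrow> 1"
    and r1: "r1 \<longlonglongrightarrow> 0" and r2: "r2 \<longlonglongrightarrow> 0"
    (* (UA2) *)
    and UA2: "\<exists>\<eta>>0.
       (\<lambda>n. INF \<beta>\<in>\<Omega>. INF c\<in>{\<beta> $ k - \<eta> <..< \<beta> $ k + \<eta>}. prob_space.prob (P n \<beta>)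
          {Z \<in> space (P n \<beta>). linfnorm (t n Z (setc k \<beta> c) - Et \<beta> (setc k \<beta> c)) \<le> r3 n})
          \<longlonglongrightarrow> 1
     \<and> (\<lambda>n. INF \<beta>\<in>\<Omega>. INF c\<in>{\<beta> $ k - \<eta> <..< \<beta> $ k + \<eta>}. prob_space.prob (P n \<beta>)
          {Z \<in> space (P n \<beta>). \<bar>v \<beta> \<bullet> t n Z (setc k \<beta> c) - v \<beta> \<bullet> Et \<beta> (setc k \<beta> c)\<bar> \<le> r4 n})
          \<longlonglongrightarrow> 1
     \<and> (\<lambda>n. INF \<beta>\<in>\<Omega>. INF c\<in>{\<beta> $ k - \<eta> <..< \<beta> $ k + \<eta>}. prob_space.prob (P n \<beta>)
          {Z \<in> space (P n \<beta>). \<forall>\<nu>\<in>{0..1::real}.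
             linfnorm (vhat n Z v* T n Z (\<nu> *\<^sub>R setc k (betahat n Z) c + (1 - \<nu>) *\<^sub>R setc k \<beta> c)
                       - v \<beta> v* ET \<beta> (setc k \<beta> c)) \<le> r5 n})
          \<longlonglongrightarrow> 1
     \<and> (\<exists>M. \<forall>\<beta>\<in>\<Omega>. \<forall>c\<in>{\<beta> $ k - \<eta> <..< \<beta> $ k + \<eta>}. linfnorm (Et \<beta> (setc k \<beta> c)) \<le> M)
     \<and> (\<exists>M. \<forall>\<beta>\<in>\<Omega>. \<forall>c\<in>{\<beta> $ k - \<eta> <..< \<beta> $ k + \<eta>}. \<forall>j. j \<noteq> k \<longrightarrow>
            \<bar>(v \<beta> v* ET \<beta> (setc k \<beta> c)) $ j\<bar> \<le> M)"
    and r3: "r3 \<longlonglongrightarrow> 0" and r4: "r4 \<longlonglongrightarrow> 0" and r5: "r5 \<longlonglongrightarrow> 0"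
    (* (UA3) *)
    and UA3a: "\<exists>C>0. \<forall>\<beta>\<in>\<Omega>. sigma2 \<beta> \<ge> C"
    and UA3b: "(\<lambda>n. SUP \<beta>\<in>\<Omega>. SUP x. \<bar>prob_space.prob (P n \<beta>)
                 {Z \<in> space (P n \<beta>). sqrt (real n) / sqrt (sigma2 \<beta>) * (v \<beta> \<bullet> t n Z \<beta>) \<le> x}
                 - Phi x\<bar>) \<longlonglongrightarrow> 0"
    (* (UA4) *)
    and UA4: "\<exists>\<gamma>>0. \<exists>\<psi> :: nat \<Rightarrow> 'z \<Rightarrow> real.
        (\<forall>n \<beta> Z vc bc. \<beta> \<in> \<Omega> \<longrightarrow> l1norm (vc - v \<beta>) < \<gamma> \<longrightarrow> l1norm (bc - \<beta>) < \<gamma> \<longrightarrow>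
            \<bar>deriv (\<lambda>c. \<Sum>i\<in>UNIV. vc $ i * T n Z (setc k bc c) $ i $ k) (bc $ k)\<bar> \<le> \<psi> n Z)
      \<and> (\<forall>n \<beta>. \<beta> \<in> \<Omega> \<longrightarrow> integrable (P n \<beta>) (\<psi> n))
      \<and> (\<exists>B. \<forall>n. \<forall>\<beta>\<in>\<Omega>. integral\<^sup>L (P n \<beta>) (\<psi> n) \<le> B)"
    (* (UA5) *)
    and UA5: "(\<lambda>n. INF \<beta>\<in>\<Omega>. prob_space.prob (P n \<beta>)
                 {Z \<in> space (P n \<beta>). \<bar>sigma2hat n Z - sigma2 \<beta>\<bar> \<le> r6 n}) \<longlonglongrightarrow> 1"
    and r6: "r6 \<longlonglongrightarrow> 0"
    (* additional hypotheses of the theorem *)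
    and sign_change: "\<And>\<beta> \<epsilon>. \<beta> \<in> \<Omega> \<Longrightarrow> \<epsilon> > 0 \<Longrightarrow>
        (v \<beta> \<bullet> Et \<beta> (setc k \<beta> (\<beta> $ k - \<epsilon>))) * (v \<beta> \<bullet> Et \<beta> (setc k \<beta> (\<beta> $ k + \<epsilon>))) < 0"
    and rates: "(\<lambda>n. sqrt (real n) * (r1 n * r5 n + r2 n * r3 n)) \<longlonglongrightarrow> 0"
  shows "(\<lambda>n. SUP \<beta>\<in>\<Omega>. SUP x. \<bar>prob_space.prob (P n \<beta>)
            {Z \<in> space (P n \<beta>). sqrt (real n) / sqrt (sigma2hat n Z) * (thetatilde n Z - \<beta> $ k) \<le> x}
            - Phi x\<bar>) \<longlonglongrightarrow> 0"
proof -
  have l00: "l0norm (0::real^'d) = 0" by (simp add: l0norm_def)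
  have O0: "0 \<in> \<Omega>" unfolding \<Omega>_def using l00 by simp
  have One: "\<Omega> \<noteq> {}" using O0 by auto
  from UA2 obtain \<eta> where \<eta>0: "\<eta> > 0"
    and U2a: "(\<lambda>n. INF \<beta>\<in>\<Omega>. INF c\<in>{\<beta> $ k - \<eta> <..< \<beta> $ k + \<eta>}. prob_space.prob (P n \<beta>)
          {Z \<in> space (P n \<beta>). linfnorm (t n Z (setc k \<beta> c) - Et \<beta> (setc k \<beta> c)) \<le> r3 n})
          \<longlonglongrightarrow> 1"
    and U2b: "(\<lambda>n. INF \<beta>\<in>\<Omega>. INF c\<in>{\<beta> $ k - \<eta> <..< \<beta> $ k + \<eta>}. prob_space.prob (P n \<beta>)
          {Z \<in> space (P n \<beta>). \<bar>v \<beta> \<bullet> t n Z (setc k \<beta> c) - v \<beta> \<bullet> Et \<beta> (setc k \<beta> c)\<bar> \<le> r4 n})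
          \<longlonglongrightarrow> 1"
    and U2c: "(\<lambda>n. INF \<beta>\<in>\<Omega>. INF c\<in>{\<beta> $ k - \<eta> <..< \<beta> $ k + \<eta>}. prob_space.prob (P n \<beta>)
          {Z \<in> space (P n \<beta>). \<forall>\<nu>\<in>{0..1::real}.
             linfnorm (vhat n Z v* T n Z (\<nu> *\<^sub>R setc k (betahat n Z) c + (1 - \<nu>) *\<^sub>R setc k \<beta> c)
                       - v \<beta> v* ET \<beta> (setc k \<beta> c)) \<le> r5 n})
          \<longlonglongrightarrow> 1"
    by blast
  from UA4 obtain \<gamma> and \<psi> :: "nat \<Rightarrow> 'z \<Rightarrow> real" and B where \<gamma>0: "\<gamma> > 0"
    and U4b: "\<And>n \<beta> Z vc bc. \<beta> \<in> \<Omega> \<Longrightarrow> l1norm (vc - v \<beta>) < \<gamma> \<Longrightarrow> l1norm (bc - \<beta>) < \<gamma> \<Longrightarrow>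
            \<bar>deriv (\<lambda>c. \<Sum>i\<in>UNIV. vc $ i * T n Z (setc k bc c) $ i $ k) (bc $ k)\<bar> \<le> \<psi> n Z"
    and U4i: "\<And>n \<beta>. \<beta> \<in> \<Omega> \<Longrightarrow> integrable (P n \<beta>) (\<psi> n)"
    and U4B: "\<And>n \<beta>. \<beta> \<in> \<Omega> \<Longrightarrow> integral\<^sup>L (P n \<beta>) (\<psi> n) \<le> B"
    by blast
  from UA3a obtain C where C0: "C > 0" and C: "\<And>\<beta>. \<beta> \<in> \<Omega> \<Longrightarrow> sigma2 \<beta> \<ge> C" by blast
  have l10: "l1norm (0::real^'d) = 0" by (simp add: l1norm_def)
  have psi0: "0 \<le> \<psi> n Z" for n Z
    using U4b[OF O0, of "v 0" 0 n Z] \<gamma>0 l10 by auto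
  have B0: "0 \<le> B"
  proof -
    have "0 \<le> integral\<^sup>L (P 0 0) (\<psi> 0)" using psi0 by (intro integral_nonneg_AE) auto
    then show ?thesis using U4B[OF O0, of 0] by linarith
  qed
  have Etb: "\<And>\<beta>. \<beta> \<in> \<Omega> \<Longrightarrow> Et \<beta> \<beta> = 0" using Et_root by blast
  have ETa: "\<And>\<beta>. \<beta> \<in> \<Omega> \<Longrightarrow> v \<beta> v* ET \<beta> \<beta> = axis k 1"
    using row_inv_axis ET_inv v_def by metis
  show ?thesis
  proof (rule sup_conv[where F = "\<lambda>n \<beta> x. \<bar>prob_space.prob (P n \<beta>)
            {Z \<in> space (P n \<beta>). sqrt (real n) / sqrt (sigma2hat n Z) * (thetatilde n Z - \<beta> $ k) \<le> x}
            - Phi x\<bar>", OF One])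
    fix \<delta>0 :: real assume d00: "\<delta>0 > 0"
    define \<delta> where "\<delta> = min \<delta>0 1"
    have d0: "\<delta> > 0" "\<delta> \<le> 1" "\<delta> \<le> \<delta>0" unfolding \<delta>_def using d00 by auto
    obtain \<eta>s where \<eta>s: "\<eta>s > 0" "\<eta>s \<le> 1/2"
      and scale: "\<And>x y. \<bar>y - x\<bar> \<le> \<eta>s * \<bar>x\<bar> \<Longrightarrow> \<bar>Phi y - Phi x\<bar> \<le> \<delta>/8"
      using Phi_scale[of "\<delta>/8"] d0 by auto
    define \<tau> where "\<tau> = \<eta>s / 3"
    define K where "K = 16 * B / \<delta> + 1"
    define eps where "eps = min (\<gamma>/2) (\<tau> / (2 * K))"
    define \<rho> where "\<rho> = \<delta> / 16"
    have \<tau>0: "\<tau> > 0" "\<tau> \<le> 1/6" using \<eta>s unfolding \<tau>_def by auto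
    have "0 \<le> 16 * B / \<delta>" using B0 d0 by simp
    then have K0: "K > 0" "K \<ge> 16 * B / \<delta>" unfolding K_def by auto
    have eps0: "eps > 0" "eps \<le> \<gamma>/2" "K * eps \<le> \<tau> / 2"
    proof -
      show "eps > 0" unfolding eps_def using \<gamma>0 \<tau>0 K0 by auto
      show "eps \<le> \<gamma>/2" unfolding eps_def by auto
      have "K * eps \<le> K * (\<tau> / (2 * K))" unfolding eps_def using K0 by (intro mult_left_mono) auto
      also have "\<dots> = \<tau> / 2" using K0 by simp
      finally show "K * eps \<le> \<tau> / 2" .
    qed
    have \<rho>0: "\<rho> > 0" unfolding \<rho>_def using d0 by auto
    have probpos: "\<And>n \<beta> A. \<beta> \<in> \<Omega> \<Longrightarrow> 0 \<le> prob_space.prob (P n \<beta>) A" by simp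
    have ev1: "\<forall>\<^sub>F n in sequentially. \<forall>\<beta>\<in>\<Omega>. 1 - \<delta>/64 \<le> prob_space.prob (P n \<beta>)
                 {Z \<in> space (P n \<beta>). l1norm (betahat n Z - \<beta>) \<le> r1 n}"
      by (rule inf_to_1[OF UA1a]) (use d0 in auto)
    have ev2: "\<forall>\<^sub>F n in sequentially. \<forall>\<beta>\<in>\<Omega>. 1 - \<delta>/64 \<le> prob_space.prob (P n \<beta>)
                 {Z \<in> space (P n \<beta>). l1norm (vhat n Z - v \<beta>) \<le> r2 n}"
      by (rule inf_to_1[OF UA1b]) (use d0 in auto)
    have ev6: "\<forall>\<^sub>F n in sequentially. \<forall>\<beta>\<in>\<Omega>. 1 - \<delta>/64 \<le> prob_space.prob (P n \<beta>)
                 {Z \<in> space (P n \<beta>). \<bar>sigma2hat n Z - sigma2 \<beta>\<bar> \<le> r6 n}"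
      by (rule inf_to_1[OF UA5]) (use d0 in auto)
    have Ine: "\<And>\<beta>. {\<beta> $ k - \<eta> <..< \<beta> $ k + \<eta>} \<noteq> {}" using \<eta>0 by auto
    have Imem: "\<And>\<beta>. \<beta> $ k \<in> {\<beta> $ k - \<eta> <..< \<beta> $ k + \<eta>}" using \<eta>0 by auto
    have ev3: "\<forall>\<^sub>F n in sequentially. \<forall>\<beta>\<in>\<Omega>. 1 - \<delta>/64 \<le> (INF c\<in>{\<beta> $ k - \<eta> <..< \<beta> $ k + \<eta>}. prob_space.prob (P n \<beta>)
          {Z \<in> space (P n \<beta>). linfnorm (t n Z (setc k \<beta> c) - Et \<beta> (setc k \<beta> c)) \<le> r3 n})"
      by (rule inf_to_1[OF U2a]) (use d0 Ine in \<open>auto intro!: inf_nonneg\<close>)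
    have ev4: "\<forall>\<^sub>F n in sequentially. \<forall>\<beta>\<in>\<Omega>. 1 - \<delta>/64 \<le> (INF c\<in>{\<beta> $ k - \<eta> <..< \<beta> $ k + \<eta>}. prob_space.prob (P n \<beta>)
          {Z \<in> space (P n \<beta>). \<bar>v \<beta> \<bullet> t n Z (setc k \<beta> c) - v \<beta> \<bullet> Et \<beta> (setc k \<beta> c)\<bar> \<le> r4 n})"
      by (rule inf_to_1[OF U2b]) (use d0 Ine in \<open>auto intro!: inf_nonneg\<close>)
    have ev5: "\<forall>\<^sub>F n in sequentially. \<forall>\<beta>\<in>\<Omega>. 1 - \<delta>/64 \<le> (INF c\<in>{\<beta> $ k - \<eta> <..< \<beta> $ k + \<eta>}. prob_space.prob (P n \<beta>)
          {Z \<in> space (P n \<beta>). \<forall>\<nu>\<in>{0..1::real}.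
             linfnorm (vhat n Z v* T n Z (\<nu> *\<^sub>R setc k (betahat n Z) c + (1 - \<nu>) *\<^sub>R setc k \<beta> c)
                       - v \<beta> v* ET \<beta> (setc k \<beta> c)) \<le> r5 n})"
      by (rule inf_to_1[OF U2c]) (use d0 Ine in \<open>auto intro!: inf_nonneg\<close>)
    have ev7: "\<forall>\<^sub>F n in sequentially. \<forall>\<beta>\<in>\<Omega>. \<forall>x. \<bar>prob_space.prob (P n \<beta>)
                 {Z \<in> space (P n \<beta>). sqrt (real n) / sqrt (sigma2 \<beta>) * (v \<beta> \<bullet> t n Z \<beta>) \<le> x}
                 - Phi x\<bar> \<le> \<delta>/16"
    proof (rule sup_to_0[OF UA3b, where B = 2])
      fix n \<beta> x assume b: "\<beta> \<in> \<Omega>"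
      interpret M: prob_space "P n \<beta>" using prob[OF b] .
      show "0 \<le> \<bar>M.prob {Z \<in> space (P n \<beta>). sqrt (real n) / sqrt (sigma2 \<beta>) * (v \<beta> \<bullet> t n Z \<beta>) \<le> x} - Phi x\<bar> \<and>
            \<bar>M.prob {Z \<in> space (P n \<beta>). sqrt (real n) / sqrt (sigma2 \<beta>) * (v \<beta> \<bullet> t n Z \<beta>) \<le> x} - Phi x\<bar> \<le> 2"
      proof -
        have h: "\<And>S. 0 \<le> M.prob S \<and> M.prob S \<le> 1" by (simp add: M.prob_le_1)
        have g: "\<And>S. 0 \<le> \<bar>M.prob S - Phi x\<bar> \<and> \<bar>M.prob S - Phi x\<bar> \<le> 2"
        proof -
          fix S show "0 \<le> \<bar>M.prob S - Phi x\<bar> \<and> \<bar>M.prob S - Phi x\<bar> \<le> 2"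
            using h[of S] Phi_nonneg[of x] Phi_le1[of x] unfolding abs_le_iff by linarith
        qed
        show ?thesis by (rule g)
      qed
    qed (use d0 in auto)
    have ev8: "\<forall>\<^sub>F n in sequentially. r1 n < \<gamma>/2" using r1 \<gamma>0 by (intro order_tendstoD) auto
    have ev9: "\<forall>\<^sub>F n in sequentially. r2 n < \<gamma>" using r2 \<gamma>0 by (intro order_tendstoD) auto
    have ev10: "\<forall>\<^sub>F n in sequentially. r5 n < \<tau>/2" using r5 \<tau>0 by (intro order_tendstoD) auto
    have lim11: "(\<lambda>n. r4 n + r1 n * r5 n + r2 n * r3 n) \<longlonglongrightarrow> 0 + 0 * 0 + 0 * 0"
      by (intro tendsto_intros r1 r2 r3 r4 r5)
    have ev11: "\<forall>\<^sub>F n in sequentially. r4 n + r1 n * r5 n + r2 n * r3 n < eps/2"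
      using lim11 eps0 by (intro order_tendstoD) auto
    have ev12: "\<forall>\<^sub>F n in sequentially. r6 n < C * \<tau>" using r6 C0 \<tau>0 by (intro order_tendstoD) auto
    have ev13: "\<forall>\<^sub>F n in sequentially. sqrt (real n) * (r1 n * r5 n + r2 n * r3 n) < \<rho> * sqrt C"
      using rates C0 \<rho>0 by (intro order_tendstoD) auto
    have "\<forall>\<^sub>F n in sequentially. \<forall>\<beta>\<in>\<Omega>. \<forall>x. \<bar>prob_space.prob (P n \<beta>)
            {Z \<in> space (P n \<beta>). sqrt (real n) / sqrt (sigma2hat n Z) * (thetatilde n Z - \<beta> $ k) \<le> x}
            - Phi x\<bar> \<le> \<delta>"
      using ev1 ev2 ev3 ev4 ev5 ev6 ev7 ev8 ev9 ev10 ev11 ev12 ev13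
    proof eventually_elim
      case (elim n)
      show ?case
      proof (intro ballI allI)
        fix \<beta> x assume b: "\<beta> \<in> \<Omega>"
        show "\<bar>prob_space.prob (P n \<beta>)
            {Z \<in> space (P n \<beta>). sqrt (real n) / sqrt (sigma2hat n Z) * (thetatilde n Z - \<beta> $ k) \<le> x}
            - Phi x\<bar> \<le> \<delta>"
          proof -
        interpret M: prob_space "P n \<beta>" using prob[OF b] .
        define \<theta> where "\<theta> = \<beta> $ k"
        have sb: "setc k \<beta> \<theta> = \<beta>" unfolding \<theta>_def by (rule setc_same)
        define A1 where "A1 = {Z \<in> space (P n \<beta>). l1norm (betahat n Z - \<beta>) \<le> r1 n}"
        define A2 where "A2 = {Z \<in> space (P n \<beta>). l1norm (vhat n Z - v \<beta>) \<le> r2 n}"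
        define A3 where "A3 = {Z \<in> space (P n \<beta>). linfnorm (t n Z (setc k \<beta> \<theta>) - Et \<beta> (setc k \<beta> \<theta>)) \<le> r3 n}"
        define A4 where "A4 = {Z \<in> space (P n \<beta>). \<bar>v \<beta> \<bullet> t n Z (setc k \<beta> \<theta>) - v \<beta> \<bullet> Et \<beta> (setc k \<beta> \<theta>)\<bar> \<le> r4 n}"
        define A5 where "A5 = {Z \<in> space (P n \<beta>). \<forall>\<nu>\<in>{0..1::real}.
             linfnorm (vhat n Z v* T n Z (\<nu> *\<^sub>R setc k (betahat n Z) \<theta> + (1 - \<nu>) *\<^sub>R setc k \<beta> \<theta>)
                       - v \<beta> v* ET \<beta> (setc k \<beta> \<theta>)) \<le> r5 n}"
        define A6 where "A6 = {Z \<in> space (P n \<beta>). \<bar>sigma2hat n Z - sigma2 \<beta>\<bar> \<le> r6 n}"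
        define A7 where "A7 = {Z \<in> space (P n \<beta>). \<psi> n Z \<le> K}"
        have p1: "1 - \<delta>/64 \<le> M.prob A1" using elim(1) b unfolding A1_def by auto
        have p2: "1 - \<delta>/64 \<le> M.prob A2" using elim(2) b unfolding A2_def by auto
        have p3: "1 - \<delta>/64 \<le> M.prob A3"
        proof -
          have "1 - \<delta>/64 \<le> (INF c\<in>{\<beta> $ k - \<eta> <..< \<beta> $ k + \<eta>}. prob_space.prob (P n \<beta>)
            {Z \<in> space (P n \<beta>). linfnorm (t n Z (setc k \<beta> c) - Et \<beta> (setc k \<beta> c)) \<le> r3 n})"
            using elim(3) b by auto
          also have "\<dots> \<le> M.prob A3" unfolding A3_def \<theta>_def by (rule inf_lower[OF Imem]) simp
          finally show ?thesis .
        qed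
        have p4: "1 - \<delta>/64 \<le> M.prob A4"
        proof -
          have "1 - \<delta>/64 \<le> (INF c\<in>{\<beta> $ k - \<eta> <..< \<beta> $ k + \<eta>}. prob_space.prob (P n \<beta>)
            {Z \<in> space (P n \<beta>). \<bar>v \<beta> \<bullet> t n Z (setc k \<beta> c) - v \<beta> \<bullet> Et \<beta> (setc k \<beta> c)\<bar> \<le> r4 n})"
            using elim(4) b by auto
          also have "\<dots> \<le> M.prob A4" unfolding A4_def \<theta>_def by (rule inf_lower[OF Imem]) simp
          finally show ?thesis .
        qed
        have p5: "1 - \<delta>/64 \<le> M.prob A5"
        proof -
          have "1 - \<delta>/64 \<le> (INF c\<in>{\<beta> $ k - \<eta> <..< \<beta> $ k + \<eta>}. prob_space.prob (P n \<beta>)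
          {Z \<in> space (P n \<beta>). \<forall>\<nu>\<in>{0..1::real}.
             linfnorm (vhat n Z v* T n Z (\<nu> *\<^sub>R setc k (betahat n Z) c + (1 - \<nu>) *\<^sub>R setc k \<beta> c)
                       - v \<beta> v* ET \<beta> (setc k \<beta> c)) \<le> r5 n})"
            using elim(5) b by auto
          also have "\<dots> \<le> M.prob A5" unfolding A5_def \<theta>_def by (rule inf_lower[OF Imem]) simp
          finally show ?thesis .
        qed
        have p6: "1 - \<delta>/64 \<le> M.prob A6" using elim(6) b unfolding A6_def by auto
        have pos: "0 < 1 - \<delta>/64" using d0 by auto
        have s1: "A1 \<in> M.events" using p1 pos by (intro in_sets_of_pos) linarith
        have s2: "A2 \<in> M.events" using p2 pos by (intro in_sets_of_pos) linarith
        have s3: "A3 \<in> M.events" using p3 pos by (intro in_sets_of_pos) linarith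
        have s4: "A4 \<in> M.events" using p4 pos by (intro in_sets_of_pos) linarith
        have s5: "A5 \<in> M.events" using p5 pos by (intro in_sets_of_pos) linarith
        have s6: "A6 \<in> M.events" using p6 pos by (intro in_sets_of_pos) linarith
        have psim[measurable]: "\<psi> n \<in> borel_measurable (P n \<beta>)"
          using U4i[OF b] by (rule borel_measurable_integrable)
        have s7: "A7 \<in> M.events" unfolding A7_def by measurable
        have q7: "M.prob (space (P n \<beta>) - A7) \<le> \<delta>/16"
        proof -
          have "M.prob (space (P n \<beta>) - A7) \<le> M.prob {Z \<in> space (P n \<beta>). \<psi> n Z \<ge> K}"
            unfolding A7_def by (intro M.finite_measure_mono) auto
          also have "\<dots> \<le> integral\<^sup>L (P n \<beta>) (\<psi> n) / K"
            using U4i[OF b] psi0 K0 by (intro integral_Markov_inequality_measure[where A="space (P n \<beta>)"]) auto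
          also have "\<dots> \<le> B / K" using U4B[OF b] K0 by (intro divide_right_mono) auto
          also have "\<dots> \<le> \<delta>/16"
          proof -
            have "B \<le> K * (\<delta>/16)" using K0(2) d0 by (simp add: field_simps)
            then show ?thesis using K0(1) by (simp add: divide_le_eq mult.commute)
          qed
          finally show ?thesis .
        qed
        have qi: "M.prob (space (P n \<beta>) - A) \<le> \<delta>/64" if "A \<in> M.events" "1 - \<delta>/64 \<le> M.prob A" for A
          using M.prob_compl[OF that(1)] that(2) by linarith
        define G where "G = A1 \<inter> (A2 \<inter> (A3 \<inter> (A4 \<inter> (A5 \<inter> (A6 \<inter> A7)))))"
        have sG: "G \<in> M.events" unfolding G_def using s1 s2 s3 s4 s5 s6 s7 by auto
        have Pbad: "M.prob (space (P n \<beta>) - G) \<le> 10 * \<delta> / 64"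
        proof -
          have "M.prob (space (P n \<beta>) - G) \<le> M.prob (space (P n \<beta>) - A1) + M.prob (space (P n \<beta>) - A2)
             + M.prob (space (P n \<beta>) - A3) + M.prob (space (P n \<beta>) - A4) + M.prob (space (P n \<beta>) - A5)
             + M.prob (space (P n \<beta>) - A6) + M.prob (space (P n \<beta>) - A7)"
            unfolding G_def
            using M.prob_compl_int[of A1 "A2 \<inter> (A3 \<inter> (A4 \<inter> (A5 \<inter> (A6 \<inter> A7))))"]
              M.prob_compl_int[of A2 "A3 \<inter> (A4 \<inter> (A5 \<inter> (A6 \<inter> A7)))"]
              M.prob_compl_int[of A3 "A4 \<inter> (A5 \<inter> (A6 \<inter> A7))"]
              M.prob_compl_int[of A4 "A5 \<inter> (A6 \<inter> A7)"]
              M.prob_compl_int[of A5 "A6 \<inter> A7"]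
              M.prob_compl_int[of A6 A7]
              s1 s2 s3 s4 s5 s6 s7 by auto
          then show ?thesis using qi[OF s1 p1] qi[OF s2 p2] qi[OF s3 p3] qi[OF s4 p4] qi[OF s5 p5] qi[OF s6 p6] q7
            by linarith
        qed
        define W where "W Z = sqrt (real n) / sqrt (sigma2 \<beta>) * (v \<beta> \<bullet> t n Z \<beta>)" for Z
        define U where "U Z = sqrt (real n) / sqrt (sigma2hat n Z) * (thetatilde n Z - \<beta> $ k)" for Z
        have tm[measurable]: "(\<lambda>Z. t n Z \<beta>) \<in> borel_measurable (P n \<beta>)" by (rule t_meas[OF b])
        have thtm[measurable]: "thetatilde n \<in> borel_measurable (P n \<beta>)" by (rule thetatilde_meas[OF b])
        have shm[measurable]: "sigma2hat n \<in> borel_measurable (P n \<beta>)" by (rule sigma2hat_meas[OF b])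
        have Wm[measurable]: "W \<in> borel_measurable (P n \<beta>)" unfolding W_def by measurable
        have Um[measurable]: "U \<in> borel_measurable (P n \<beta>)" unfolding U_def by measurable
        have WPhi: "\<bar>M.prob {Z \<in> space (P n \<beta>). W Z \<le> y} - Phi y\<bar> \<le> \<delta>/16" for y
          using elim(7) b unfolding W_def by auto
        have sig: "sigma2 \<beta> \<ge> C" using C[OF b] .
        have key: "(U Z \<le> x \<longrightarrow> W Z \<ge> - (x + \<eta>s * \<bar>x\<bar>) - \<rho>) \<and> (W Z \<ge> - (x - \<eta>s * \<bar>x\<bar>) + \<rho> \<longrightarrow> U Z \<le> x)"
          if Z: "Z \<in> G" for Z
        proof -
          have e1: "l1norm (betahat n Z - \<beta>) \<le> r1 n" using Z unfolding G_def A1_def by auto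
          have e2: "l1norm (vhat n Z - v \<beta>) \<le> r2 n" using Z unfolding G_def A2_def by auto
          have e3: "linfnorm (t n Z \<beta>) \<le> r3 n" using Z Etb[OF b] unfolding G_def A3_def sb by auto
          have e4: "\<bar>v \<beta> \<bullet> t n Z \<beta>\<bar> \<le> r4 n" using Z Etb[OF b] unfolding G_def A4_def sb by auto
          have e5: "\<forall>\<nu>\<in>{0..1::real}. linfnorm (vhat n Z v* T n Z (\<nu> *\<^sub>R setc k (betahat n Z) (\<beta> $ k) + (1 - \<nu>) *\<^sub>R \<beta>) - axis k 1) \<le> r5 n"
            using Z ETa[OF b] unfolding G_def A5_def sb by (auto simp: \<theta>_def)
          have e6: "\<bar>sigma2hat n Z - sigma2 \<beta>\<bar> \<le> r6 n" using Z unfolding G_def A6_def by auto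
          have e7: "\<psi> n Z \<le> K" using Z unfolding G_def A7_def by auto
          have psiK: "\<bar>deriv (\<lambda>c. \<Sum>i\<in>UNIV. vhat n Z $ i * T n Z (setc k bc c) $ i $ k) (bc $ k)\<bar> \<le> K"
            if "l1norm (bc - \<beta>) < \<gamma>" for bc
          proof -
            have "l1norm (vhat n Z - v \<beta>) < \<gamma>" using e2 elim(9) by linarith
            from U4b[OF b this that, of n Z] show ?thesis using e7 by linarith
          qed
          have c1: "r1 n + eps < \<gamma>" using elim(8) eps0 by linarith
          have c2: "r5 n + K * eps \<le> \<tau>" using elim(10) eps0 by linarith
          have c3: "\<tau> \<le> 1/2" using \<tau>0 by linarith
          obtain D where D: "\<bar>D - 1\<bar> \<le> \<tau>"
            "thetatilde n Z - \<beta> $ k = - (vhat n Z \<bullet> t n Z (setc k (betahat n Z) (\<beta> $ k))) / D"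
            "\<bar>vhat n Z \<bullet> t n Z (setc k (betahat n Z) (\<beta> $ k)) - v \<beta> \<bullet> t n Z \<beta>\<bar> \<le> r1 n * r5 n + r2 n * r3 n"
            using core[OF t_deriv T_diff thetatilde_root e1 e2 e3 e4 e5 psiK c1 c2 c3 elim(11) eps0(1)]
            by blast
          define g where "g = vhat n Z \<bullet> t n Z (setc k (betahat n Z) (\<beta> $ k))"
          define w where "w = v \<beta> \<bullet> t n Z \<beta>"
          define s2 where "s2 = sigma2 \<beta>"
          define sh where "sh = sigma2hat n Z"
          have s2C: "s2 \<ge> C" unfolding s2_def using sig .
          have s20: "s2 > 0" using s2C C0 by linarith
          have shd: "\<bar>sh - s2\<bar> < C * \<tau>" using e6 elim(12) unfolding sh_def s2_def by linarith
          have "C * \<tau> \<le> C" using C0 \<tau>0 by simp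
          then have sh0: "sh > 0" using shd s2C by linarith
          define q where "q = sh / s2"
          have "\<bar>q - 1\<bar> = \<bar>sh - s2\<bar> / s2" unfolding q_def using s20 by (simp add: field_simps abs_divide)
          also have "\<dots> \<le> (C * \<tau>) / C" using shd s20 s2C C0 by (intro frac_le) auto
          also have "\<dots> = \<tau>" using C0 by simp
          finally have q1: "\<bar>q - 1\<bar> \<le> \<tau>" .
          have q0: "q > 0" unfolding q_def using sh0 s20 by simp
          define sq where "sq = sqrt q"
          have sq0: "sq > 0" unfolding sq_def using q0 by simp
          have "(sq - 1) * (sq + 1) = q - 1" unfolding sq_def using q0
            by (simp add: algebra_simps real_sqrt_mult_self)
          then have "sq - 1 = (q - 1) / (sq + 1)" using sq0 by (simp add: eq_divide_eq)
          then have "\<bar>sq - 1\<bar> = \<bar>q - 1\<bar> / (sq + 1)" using sq0 by (simp add: abs_divide)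
          also have "\<dots> \<le> \<bar>q - 1\<bar>"
          proof -
            have "\<bar>q - 1\<bar> * 1 \<le> \<bar>q - 1\<bar> * (sq + 1)" by (intro mult_left_mono) (use sq0 in auto)
            then show ?thesis using sq0 by (simp add: divide_le_eq)
          qed
          finally have sq1: "\<bar>sq - 1\<bar> \<le> \<tau>" using q1 by linarith
          define c where "c = D * sq"
          have D0: "D > 0" using D(1) c3 by linarith
          have c0: "c > 0" unfolding c_def using D0 sq0 by simp
          have "c - 1 = D * (sq - 1) + (D - 1)" unfolding c_def by (simp add: algebra_simps)
          then have "\<bar>c - 1\<bar> \<le> \<bar>D\<bar> * \<bar>sq - 1\<bar> + \<bar>D - 1\<bar>" by (simp add: abs_mult[symmetric] abs_triangle_ineq)
          also have "\<dots> \<le> 2 * \<tau> + \<tau>"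
          proof -
            have "\<bar>D\<bar> \<le> 2" using D(1) c3 by linarith
            then have "\<bar>D\<bar> * \<bar>sq - 1\<bar> \<le> 2 * \<tau>" using sq1 by (intro mult_mono) auto
            then show ?thesis using D(1) by linarith
          qed
          finally have c1': "\<bar>c - 1\<bar> \<le> \<eta>s" unfolding \<tau>_def by linarith
          define R where "R = sqrt (real n) / sqrt s2 * (g - w)"
          have "\<bar>R\<bar> = sqrt (real n) * \<bar>g - w\<bar> / sqrt s2" unfolding R_def using s20 by (simp add: abs_mult)
          also have "\<dots> \<le> sqrt (real n) * (r1 n * r5 n + r2 n * r3 n) / sqrt C"
          proof (rule frac_le)
            show "sqrt (real n) * \<bar>g - w\<bar> \<le> sqrt (real n) * (r1 n * r5 n + r2 n * r3 n)"
              using D(3) unfolding g_def w_def by (intro mult_left_mono) auto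
            show "sqrt C \<le> sqrt s2" using s2C by simp
          qed (use C0 D(3) in auto)
          also have "\<dots> < \<rho>" using elim(13) C0 by (simp add: divide_less_eq)
          finally have R1: "\<bar>R\<bar> \<le> \<rho>" by linarith
          have UZ: "U Z = - (W Z + R) / c"
          proof -
            have "U Z = sqrt (real n) / sqrt sh * (- g / D)"
              unfolding U_def sh_def g_def using D(2) by simp
            also have "\<dots> = - (sqrt (real n) / sqrt s2 * w + sqrt (real n) / sqrt s2 * (g - w)) / (D * sqrt (sh / s2))"
              by (rule alg2[OF s20 sh0]) (use D0 in auto)
            finally show ?thesis unfolding W_def R_def c_def sq_def q_def w_def s2_def by simp
          qed
          show ?thesis by (rule alg1[OF c0 c1' R1 UZ])
        qed
        define lo where "lo = - (x + \<eta>s * \<bar>x\<bar>)"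
        define hi where "hi = - (x - \<eta>s * \<bar>x\<bar>)"
        define S where "S = {Z \<in> space (P n \<beta>). U Z \<le> x}"
        have sS: "S \<in> M.events" unfolding S_def by measurable
        have sW1: "{Z \<in> space (P n \<beta>). W Z \<ge> lo - \<rho>} \<in> M.events" by measurable
        have sW2: "{Z \<in> space (P n \<beta>). W Z \<ge> hi + \<rho>} \<in> M.events" by measurable
        have up: "M.prob S \<le> Phi x + \<delta>/8 + 2 * \<rho> + \<delta>/16 + 10 * \<delta> / 64"
        proof -
          have "M.prob S \<le> M.prob {Z \<in> space (P n \<beta>). W Z \<ge> lo - \<rho>} + M.prob (space (P n \<beta>) - G)"
            by (rule M.prob_upper[OF sS sG sW1]) (use key in \<open>auto simp: S_def lo_def\<close>)
          also have "M.prob {Z \<in> space (P n \<beta>). W Z \<ge> lo - \<rho>} \<le> 1 - M.prob {Z \<in> space (P n \<beta>). W Z \<le> lo - \<rho> - \<rho>}"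
            by (rule M.prob_ge_upper[OF Wm \<rho>0])
          also have "1 - M.prob {Z \<in> space (P n \<beta>). W Z \<le> lo - \<rho> - \<rho>} \<le> 1 - Phi (lo - \<rho> - \<rho>) + \<delta>/16"
            using WPhi[of "lo - \<rho> - \<rho>"] by linarith
          also have "1 - Phi (lo - \<rho> - \<rho>) = Phi (- lo + 2 * \<rho>)"
            using Phi_neg[of "- lo + 2 * \<rho>"] by simp
          also have "Phi (- lo + 2 * \<rho>) \<le> Phi (- lo) + 2 * \<rho>" using Phi_lip[of "- lo" "- lo + 2 * \<rho>"] \<rho>0 by linarith
          also have "Phi (- lo) \<le> Phi x + \<delta>/8"
          proof -
            have h: "\<bar>(- lo) - x\<bar> \<le> \<eta>s * \<bar>x\<bar>" unfolding lo_def using \<eta>s by (simp add: abs_mult)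
            have "\<bar>Phi (- lo) - Phi x\<bar> \<le> \<delta>/8" using scale h by blast
            then show ?thesis by linarith
          qed
          finally show ?thesis using Pbad by linarith
        qed
        have lw: "Phi x - \<delta>/8 - \<rho> - \<delta>/16 - 10 * \<delta> / 64 \<le> M.prob S"
        proof -
          have "M.prob {Z \<in> space (P n \<beta>). W Z \<ge> hi + \<rho>} - M.prob (space (P n \<beta>) - G) \<le> M.prob S"
            by (rule M.prob_lower[OF sS sG sW2]) (use key in \<open>auto simp: S_def hi_def\<close>)
          moreover have "1 - M.prob {Z \<in> space (P n \<beta>). W Z \<le> hi + \<rho>} \<le> M.prob {Z \<in> space (P n \<beta>). W Z \<ge> hi + \<rho>}"
            by (rule M.prob_ge_lower[OF Wm])
          moreover have "1 - Phi (hi + \<rho>) - \<delta>/16 \<le> 1 - M.prob {Z \<in> space (P n \<beta>). W Z \<le> hi + \<rho>}"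
            using WPhi[of "hi + \<rho>"] by linarith
          moreover have "1 - Phi (hi + \<rho>) = Phi (- hi - \<rho>)"
            using Phi_neg[of "hi + \<rho>"] by simp
          moreover have "Phi (- hi) - \<rho> \<le> Phi (- hi - \<rho>)" using Phi_lip[of "- hi - \<rho>" "- hi"] \<rho>0 by linarith
          moreover have "Phi x - \<delta>/8 \<le> Phi (- hi)"
          proof -
            have h: "\<bar>(- hi) - x\<bar> \<le> \<eta>s * \<bar>x\<bar>" unfolding hi_def using \<eta>s by (simp add: abs_mult)
            have "\<bar>Phi (- hi) - Phi x\<bar> \<le> \<delta>/8" using scale h by blast
            then show ?thesis by linarith
          qed
          ultimately show ?thesis using Pbad by linarith
        qed
        have "\<bar>M.prob S - Phi x\<bar> \<le> \<delta>/8 + 2 * \<rho> + \<delta>/16 + 10 * \<delta> / 64"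
          using up lw \<rho>0 by (simp add: abs_le_iff)
        also have "\<dots> \<le> \<delta>" unfolding \<rho>_def using d0 by simp
        finally show ?thesis unfolding S_def U_def by simp
      qed

      qed
    qed
    then show "\<forall>\<^sub>F n in sequentially. \<forall>\<beta>\<in>\<Omega>. \<forall>x. \<bar>prob_space.prob (P n \<beta>)
            {Z \<in> space (P n \<beta>). sqrt (real n) / sqrt (sigma2hat n Z) * (thetatilde n Z - \<beta> $ k) \<le> x}
            - Phi x\<bar> \<le> \<delta>0"
      by (rule eventually_mono) (meson d0(3) order_trans)
  qed (simp)
qed


end
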